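(* Let $H_1,\dots,H_n$ be finite-dimensional Hilbert spaces and let $E_W$ be the witnessed entanglement on density operators of $H_1\otimes\cdots\otimes H_n$ (defined in the context). Then: (i) for every density operator $\sigma$, $E_W(\sigma)=0$ if and only if $\sigma$ is separable; (ii) for all unitaries $U_k$ on $H_k$ ($k=1,\dots,n$) and every density operator $\sigma$, $E_W(\sigma)=E_W\big((U_1^\dagger\otimes\cdots\otimes U_n^\dagger)\,\sigma\,(U_1\otimes\cdots\otimes U_n)\big)$; (iv) (continuity) for every norm $\|\cdot\|_L$ on the (finite-dimensional) space of operators on $H_1\otimes\cdots\otimes H_n$ there is a real constant $C=C(L)\ge 0$ such that for every $\epsilon\ge 0$ and all density operators $\rho,\sigma$, if $\|\rho-\sigma\|_L\le\epsilon$ then $|E_W(\rho)-E_W(\sigma)|\le C\epsilon$; (v) (convexity) for all density operators $\rho,\sigma$ and all $0\le\lambda\le 1$, $E_W(\lambda\rho+(1-\lambda)\sigma)\le\lambda E_W(\rho)+(1-\lambda)E_W(\sigma)$.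
   Context: A density operator $\sigma$ on $H_1\otimes\cdots\otimes H_n$ is (fully) separable if it is a convex combination of product states $\sigma_1\otimes\cdots\otimes\sigma_n$. An entanglement witness (EW) is a Hermitian operator $W$ on $H_1\otimes\cdots\otimes H_n$ with $\mathrm{Tr}(W\sigma)\ge 0$ for every separable $\sigma$; only normalized witnesses, $\mathrm{Tr}(W)=1$, are considered. An optimal entanglement witness $W_\rho$ for $\rho$ is a normalized EW minimizing $\mathrm{Tr}(W\rho)$ over all normalized EWs $W$. The witnessed entanglement is $E_W(\rho)=\max\{0,-\mathrm{Tr}(W_\rho\rho)\}$, i.e. $E_W(\rho)=\max\{0,-\min_W \mathrm{Tr}(W\rho)\}$ with the minimum over normalized EWs. *)

theory Defs
  imports "Jordan_Normal_Form.Schur_Decomposition"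
begin

text \<open>Finite-dimensional Hilbert spaces H_1,...,H_n are modelled as C^(d_k), given by
  a list dims = [d_1,...,d_n]; operators on H_1 (x) ... (x) H_n are complex
  D x D matrices with D = prod_list dims, the tensor product being the Kronecker product.\<close>

definition mtrace :: "complex mat \<Rightarrow> complex" where
  "mtrace A = (\<Sum>i<dim_row A. A $$ (i,i))"

definition hermitian_mat :: "complex mat \<Rightarrow> bool" where
  "hermitian_mat A \<longleftrightarrow> mat_adjoint A = A"

definition density_op :: "nat \<Rightarrow> complex mat \<Rightarrow> bool" where
  "density_op d \<rho> \<longleftrightarrow> \<rho> \<in> carrier_mat d d \<and> hermitian_mat \<rho>
     \<and> (\<forall>v \<in> carrier_vec d. 0 \<le> Re ((\<rho> *\<^sub>v v) \<bullet>c v))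
     \<and> mtrace \<rho> = 1"

definition unitary_mat :: "nat \<Rightarrow> complex mat \<Rightarrow> bool" where
  "unitary_mat d U \<longleftrightarrow> U \<in> carrier_mat d d \<and> U * mat_adjoint U = 1\<^sub>m d
     \<and> mat_adjoint U * U = 1\<^sub>m d"

definition kron :: "complex mat \<Rightarrow> complex mat \<Rightarrow> complex mat" where
  "kron A B = mat (dim_row A * dim_row B) (dim_col A * dim_col B)
     (\<lambda>(i,j). A $$ (i div dim_row B, j div dim_col B) * B $$ (i mod dim_row B, j mod dim_col B))"

fun kron_list :: "complex mat list \<Rightarrow> complex mat" where
  "kron_list [] = 1\<^sub>m 1"
| "kron_list (A # As) = kron A (kron_list As)"

definition product_state :: "nat list \<Rightarrow> complex mat \<Rightarrow> bool" where
  "product_state dims \<sigma> \<longleftrightarrow> (\<exists>\<sigma>s. length \<sigma>s = length dims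
     \<and> (\<forall>k < length dims. density_op (dims ! k) (\<sigma>s ! k)) \<and> \<sigma> = kron_list \<sigma>s)"

definition separable :: "nat list \<Rightarrow> complex mat \<Rightarrow> bool" where
  "separable dims \<sigma> \<longleftrightarrow> \<sigma> \<in> carrier_mat (prod_list dims) (prod_list dims) \<and>
     (\<exists>(m::nat) (p::nat \<Rightarrow> real) \<tau>. (\<forall>j<m. 0 \<le> p j \<and> product_state dims (\<tau> j))
       \<and> (\<Sum>j<m. p j) = 1
       \<and> (\<forall>a < prod_list dims. \<forall>b < prod_list dims.
            \<sigma> $$ (a,b) = (\<Sum>j<m. complex_of_real (p j) * \<tau> j $$ (a,b))))"

definition entanglement_witness :: "nat list \<Rightarrow> complex mat \<Rightarrow> bool" where
  "entanglement_witness dims W \<longleftrightarrow> W \<in> carrier_mat (prod_list dims) (prod_list dims)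
     \<and> hermitian_mat W \<and> (\<forall>\<sigma>. separable dims \<sigma> \<longrightarrow> 0 \<le> Re (mtrace (W * \<sigma>)))"

definition normalized_EW :: "nat list \<Rightarrow> complex mat \<Rightarrow> bool" where
  "normalized_EW dims W \<longleftrightarrow> entanglement_witness dims W \<and> mtrace W = 1"

text \<open>Witnessed entanglement: max(0, - min over normalized EWs of Tr(W rho)).
  (The minimum is attained; we write it as an infimum.)\<close>
definition witnessed_ent :: "nat list \<Rightarrow> complex mat \<Rightarrow> real" where
  "witnessed_ent dims \<rho> =
     max 0 (- (INF W \<in> {W. normalized_EW dims W}. Re (mtrace (W * \<rho>))))"

definition mat_norm :: "nat \<Rightarrow> (complex mat \<Rightarrow> real) \<Rightarrow> bool" where
  "mat_norm D N \<longleftrightarrow>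
     (\<forall>A \<in> carrier_mat D D. 0 \<le> N A \<and> (N A = 0 \<longleftrightarrow> A = 0\<^sub>m D D))
   \<and> (\<forall>A \<in> carrier_mat D D. \<forall>c. N (c \<cdot>\<^sub>m A) = cmod c * N A)
   \<and> (\<forall>A \<in> carrier_mat D D. \<forall>B \<in> carrier_mat D D. N (A + B) \<le> N A + N B)"

end

theory Submission
  imports Defs "HOL-Computational_Algebra.Fundamental_Theorem_Algebra"
begin


lemma adj_dims[simp]: "dim_row (mat_adjoint A) = dim_col A" "dim_col (mat_adjoint A) = dim_row A"
  unfolding mat_adjoint_def by auto

lemma adj_index[simp]: "i < dim_col A \<Longrightarrow> j < dim_row A \<Longrightarrow> mat_adjoint A $$ (i,j) = cnj (A $$ (j,i))"
  unfolding mat_adjoint_def by (auto simp: mat_of_rows_def)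

lemma adj_carrier: "A \<in> carrier_mat n m \<Longrightarrow> mat_adjoint A \<in> carrier_mat m n" by auto

lemma hermitian_iff: assumes "A \<in> carrier_mat n n"
  shows "hermitian_mat A \<longleftrightarrow> (\<forall>i<n. \<forall>j<n. A $$ (j,i) = cnj (A $$ (i,j)))"
proof
  assume "hermitian_mat A"
  hence h: "mat_adjoint A = A" unfolding hermitian_mat_def .
  show "\<forall>i<n. \<forall>j<n. A $$ (j,i) = cnj (A $$ (i,j))"
  proof (intro allI impI)
    fix i j assume "i < n" "j < n"
    hence "mat_adjoint A $$ (j,i) = cnj (A $$ (i,j))" using assms by auto
    thus "A $$ (j,i) = cnj (A $$ (i,j))" using h by simp
  qed
next
  assume a: "\<forall>i<n. \<forall>j<n. A $$ (j,i) = cnj (A $$ (i,j))"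
  show "hermitian_mat A" unfolding hermitian_mat_def
  proof (rule eq_matI)
    fix i j assume "i < dim_row A" "j < dim_col A"
    thus "mat_adjoint A $$ (i, j) = A $$ (i, j)" using assms a[rule_format, of j i] by simp
  qed (insert assms, auto)
qed

lemma mtrace_mult: assumes "A \<in> carrier_mat n n" "B \<in> carrier_mat n n"
  shows "mtrace (A * B) = (\<Sum>i<n. \<Sum>j<n. A $$ (i,j) * B $$ (j,i))"
proof -
  have "mtrace (A * B) = (\<Sum>i<n. (A*B) $$ (i,i))" using assms unfolding mtrace_def by simp
  also have "\<dots> = (\<Sum>i<n. \<Sum>j<n. A $$ (i,j) * B $$ (j,i))"
  proof (rule sum.cong[OF refl])
    fix i assume "i \<in> {..<n}"
    hence "(A*B) $$ (i,i) = row A i \<bullet> col B i" using assms by simp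
    also have "\<dots> = (\<Sum>j<n. A $$ (i,j) * B $$ (j,i))"
      using assms \<open>i \<in> {..<n}\<close> unfolding scalar_prod_def
      by (simp add: lessThan_atLeast0)
    finally show "(A*B) $$ (i,i) = (\<Sum>j<n. A $$ (i,j) * B $$ (j,i))" .
  qed
  finally show ?thesis .
qed

lemma kron_dims[simp]: "dim_row (kron A B) = dim_row A * dim_row B" "dim_col (kron A B) = dim_col A * dim_col B"
  unfolding kron_def by auto

lemma kron_index: "i < dim_row A * dim_row B \<Longrightarrow> j < dim_col A * dim_col B \<Longrightarrow>
  kron A B $$ (i,j) = A $$ (i div dim_row B, j div dim_col B) * B $$ (i mod dim_row B, j mod dim_col B)"
  unfolding kron_def by auto

lemma kron_list_carrier: "length As = length dims \<Longrightarrow> (\<forall>k<length dims. As ! k \<in> carrier_mat (dims!k) (dims!k))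
  \<Longrightarrow> kron_list As \<in> carrier_mat (prod_list dims) (prod_list dims)"
proof (induction As arbitrary: dims)
  case Nil thus ?case by auto
next
  case (Cons A As)
  then obtain d ds where dims: "dims = d # ds" by (cases dims) auto
  have l: "length As = length ds" using Cons(2) dims by simp
  have c: "\<forall>k<length ds. As ! k \<in> carrier_mat (ds!k) (ds!k)"
  proof (intro allI impI)
    fix k assume "k < length ds" thus "As ! k \<in> carrier_mat (ds!k) (ds!k)"
      using Cons(3)[rule_format, of "Suc k"] dims by simp
  qed
  have "kron_list As \<in> carrier_mat (prod_list ds) (prod_list ds)"
    by (rule Cons.IH[OF l c])
  moreover have "A \<in> carrier_mat d d" using Cons(3) dims by force
  ultimately show ?case by (auto simp: dims)
qed

lemma mult_index: "A \<in> carrier_mat n m \<Longrightarrow> B \<in> carrier_mat m l \<Longrightarrow> i < n \<Longrightarrow> j < l \<Longrightarrow>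
  (A * B) $$ (i,j) = (\<Sum>k<m. A $$ (i,k) * B $$ (k,j))"
  by (simp add: scalar_prod_def lessThan_atLeast0)

lemma mtrace_comm: assumes "A \<in> carrier_mat n n" "B \<in> carrier_mat n n"
  shows "mtrace (A * B) = mtrace (B * A)"
  unfolding mtrace_mult[OF assms] mtrace_mult[OF assms(2,1)]
  by (subst sum.swap) (simp add: mult.commute)

definition unitv :: "nat \<Rightarrow> complex vec \<Rightarrow> bool" where
  "unitv d v \<longleftrightarrow> v \<in> carrier_vec d \<and> (\<Sum>i<d. (cmod (v $ i))\<^sup>2) = 1"

definition outer :: "complex vec \<Rightarrow> complex mat" where
  "outer v = mat (dim_vec v) (dim_vec v) (\<lambda>(i,j). v $ i * cnj (v $ j))"

fun kvec :: "complex vec list \<Rightarrow> complex vec" where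
  "kvec [] = vec 1 (\<lambda>_. 1)"
| "kvec (v # vs) = vec (dim_vec v * dim_vec (kvec vs))
     (\<lambda>i. v $ (i div dim_vec (kvec vs)) * kvec vs $ (i mod dim_vec (kvec vs)))"

definition quad :: "complex mat \<Rightarrow> complex vec \<Rightarrow> complex" where
  "quad V x = (\<Sum>i<dim_vec x. \<Sum>j<dim_vec x. cnj (x $ i) * V $$ (i,j) * x $ j)"

definition bp :: "nat list \<Rightarrow> complex mat \<Rightarrow> bool" where
  "bp dims V \<longleftrightarrow> V \<in> carrier_mat (prod_list dims) (prod_list dims)
    \<and> (\<forall>i<prod_list dims. \<forall>j<prod_list dims. V $$ (j,i) = cnj (V $$ (i,j)))
    \<and> (\<forall>vs. length vs = length dims \<and> (\<forall>k<length dims. unitv (dims!k) (vs!k))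
          \<longrightarrow> 0 \<le> Re (quad V (kvec vs)))"

lemma dim_kvec: "dim_vec (kvec vs) = prod_list (map dim_vec vs)"
  by (induction vs) auto

lemma dim_kvec': assumes "length vs = length dims" "(\<forall>k<length dims. vs ! k \<in> carrier_vec (dims ! k))"
  shows "dim_vec (kvec vs) = prod_list dims"
proof -
  have "map dim_vec vs = dims" by (rule nth_equalityI) (insert assms, auto)
  thus ?thesis unfolding dim_kvec by simp
qed

lemma outer_carrier: "v \<in> carrier_vec d \<Longrightarrow> outer v \<in> carrier_mat d d"
  unfolding outer_def by auto

lemma outer_index: "i < dim_vec v \<Longrightarrow> j < dim_vec v \<Longrightarrow> outer v $$ (i,j) = v $ i * cnj (v $ j)"
  unfolding outer_def by auto

lemma kron_outer: "kron_list (map outer vs) = outer (kvec vs)"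
proof (induction vs)
  case Nil
  show ?case by (rule eq_matI) (auto simp: outer_def)
next
  case (Cons v vs)
  let ?w = "kvec vs"
  show ?case unfolding list.map kron_list.simps Cons
  proof (rule eq_matI)
    fix i j assume i: "i < dim_row (outer (kvec (v # vs)))" and j: "j < dim_col (outer (kvec (v # vs)))"
    have ii: "i < dim_vec v * dim_vec ?w" and jj: "j < dim_vec v * dim_vec ?w" using i j by (auto simp: outer_def)
    have pos: "0 < dim_vec ?w" using ii by (metis mult_0_right not_less_zero neq0_conv)
    have a: "i div dim_vec ?w < dim_vec v" "j div dim_vec ?w < dim_vec v" using ii jj
      by (simp_all add: less_mult_imp_div_less)
    have b: "i mod dim_vec ?w < dim_vec ?w" "j mod dim_vec ?w < dim_vec ?w" using pos by auto
    show "kron (outer v) (outer ?w) $$ (i, j) = outer (kvec (v # vs)) $$ (i, j)"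
      using ii jj a b by (simp add: kron_index outer_def)
  qed (auto simp: outer_def)
qed

lemma mtrace_outer: assumes "W \<in> carrier_mat n n" "x \<in> carrier_vec n"
  shows "mtrace (W * outer x) = quad W x"
proof -
  have "mtrace (W * outer x) = (\<Sum>i<n. \<Sum>j<n. W $$ (i,j) * (x $ j * cnj (x $ i)))"
    using assms by (simp add: mtrace_mult[OF assms(1) outer_carrier[OF assms(2)]] outer_index)
  also have "\<dots> = quad W x" unfolding quad_def using assms
    by (auto intro!: sum.cong simp: ac_simps)
  finally show ?thesis .
qed

lemma quad_mulv: assumes "V \<in> carrier_mat n n" "x \<in> carrier_vec n"
  shows "(V *\<^sub>v x) \<bullet>c x = quad V x"
proof -
  have "(V *\<^sub>v x) \<bullet>c x = (\<Sum>i<n. (\<Sum>j<n. V $$ (i,j) * x $ j) * cnj (x $ i))"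
    using assms by (auto simp: scalar_prod_def lessThan_atLeast0 intro!: sum.cong)
  also have "\<dots> = quad V x" unfolding quad_def using assms
    by (auto intro!: sum.cong simp: sum_distrib_left ac_simps)
  finally show ?thesis .
qed

lemma unitv_density: assumes "unitv d v" shows "density_op d (outer v)"
proof -
  have v: "v \<in> carrier_vec d" and n: "(\<Sum>i<d. (cmod (v $ i))\<^sup>2) = 1" using assms unfolding unitv_def by auto
  have c: "outer v \<in> carrier_mat d d" using outer_carrier[OF v] .
  have h: "hermitian_mat (outer v)" unfolding hermitian_iff[OF c] using v by (auto simp: outer_index)
  have p: "0 \<le> Re ((outer v *\<^sub>v w) \<bullet>c w)" if w: "w \<in> carrier_vec d" for w
  proof -
    let ?s = "\<Sum>j<d. cnj (v $ j) * w $ j"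
    have "quad (outer v) w = (\<Sum>i<d. \<Sum>j<d. cnj (w $ i) * (v $ i * cnj (v $ j)) * w $ j)"
      unfolding quad_def using v w by (auto simp: outer_index intro!: sum.cong)
    also have "\<dots> = (\<Sum>i<d. cnj (w $ i) * v $ i) * ?s"
      by (simp add: sum_product ac_simps)
    also have "\<dots> = cnj ?s * ?s" by (simp add: ac_simps)
    finally have q: "quad (outer v) w = cnj ?s * ?s" .
    have e: "cnj ?s * ?s = complex_of_real ((cmod ?s)\<^sup>2)"
      using complex_norm_square[of ?s] by (simp only: mult.commute)
    have "(outer v *\<^sub>v w) \<bullet>c w = complex_of_real ((cmod ?s)\<^sup>2)"
      using quad_mulv[OF c w] q e by simp
    thus ?thesis by simp
  qed
  have t: "mtrace (outer v) = 1"
  proof -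
    have "mtrace (outer v) = (\<Sum>i<d. v $ i * cnj (v $ i))" unfolding mtrace_def using c v by (auto simp: outer_index)
    also have "\<dots> = (\<Sum>i<d. complex_of_real ((cmod (v $ i))\<^sup>2))" by (rule sum.cong[OF refl], rule complex_norm_square[symmetric])
    also have "\<dots> = complex_of_real (\<Sum>i<d. (cmod (v $ i))\<^sup>2)" by (simp only: of_real_sum)
    finally show ?thesis using n by simp
  qed
  show ?thesis unfolding density_op_def using c h p t by auto
qed



lemma sum_prod_split: "(\<Sum>i<a*b. f i) = (\<Sum>p<a. \<Sum>q<b. f (p*b+q::nat))"
proof (induction a)
  case 0 thus ?case by simp
next
  case (Suc a)
  have "(\<Sum>i<Suc a*b. f i) = (\<Sum>i<a*b. f i) + (\<Sum>i\<in>{a*b..<a*b+b}. f i)"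
    by (simp add: add.commute lessThan_atLeast0 sum.atLeastLessThan_concat)
  also have "(\<Sum>i\<in>{a*b..<a*b+b}. f i) = (\<Sum>q<b. f (a*b+q))"
    by (rule sum.reindex_bij_witness[of _ "\<lambda>i. a*b+i" "\<lambda>i. i - a*b"]) auto
  finally show ?case using Suc by simp
qed

lemma one_point_sum: fixes d :: nat assumes "p < d" "\<forall>i<d. i \<noteq> p \<longrightarrow> f i = 0"
  shows "(\<Sum>i<d. f i) = f p"
proof -
  have "(\<Sum>i<d. f i) = f p + (\<Sum>i\<in>{..<d}-{p}. f i)" using sum.remove[of "{..<d}" p f] assms(1) by simp
  also have "(\<Sum>i\<in>{..<d}-{p}. f i) = 0" using assms(2) by (intro sum.neutral) auto
  finally show ?thesis by simp
qed

lemma two_point_sum: fixes d :: nat assumes "p < d" "q < d" "p \<noteq> q" "\<forall>i<d. i \<noteq> p \<and> i \<noteq> q \<longrightarrow> f i = 0"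
  shows "(\<Sum>i<d. f i) = f p + f q"
proof -
  have "(\<Sum>i<d. f i) = f p + (\<Sum>i\<in>{..<d}-{p}. f i)" using sum.remove[of "{..<d}" p f] assms(1) by simp
  also have "(\<Sum>i\<in>{..<d}-{p}. f i) = f q + (\<Sum>i\<in>{..<d}-{p}-{q}. f i)" using assms(2,3) by (subst sum.remove[of _ q]) auto
  also have "(\<Sum>i\<in>{..<d}-{p}-{q}. f i) = 0" using assms(4) by (intro sum.neutral) auto
  finally show ?thesis by simp
qed

lemma two_le_sum: fixes g :: "nat \<Rightarrow> real" and d :: nat
  assumes "p < d" "q < d" "p \<noteq> q" "\<forall>i<d. 0 \<le> g i"
  shows "g p + g q \<le> (\<Sum>i<d. g i)"
proof -
  have "(\<Sum>i\<in>{p,q}. g i) \<le> (\<Sum>i<d. g i)" using assms by (intro sum_mono2) auto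
  thus ?thesis using assms(3) by simp
qed

definition blk :: "nat \<Rightarrow> nat \<Rightarrow> complex mat \<Rightarrow> complex vec \<Rightarrow> complex mat" where
  "blk d D' V x = mat D' D' (\<lambda>(a,b). \<Sum>p<d. \<Sum>q<d. cnj (x$p) * x$q * V$$(p*D'+a, q*D'+b))"

lemma blk_index: "a < D' \<Longrightarrow> b < D' \<Longrightarrow>
   blk d D' V x $$ (a,b) = (\<Sum>p<d. \<Sum>q<d. cnj (x$p) * x$q * V$$(p*D'+a, q*D'+b))"
  unfolding blk_def by simp

lemma blk_carrier: "blk d D' V x \<in> carrier_mat D' D'" unfolding blk_def by simp

lemma idx_lt: "p < d \<Longrightarrow> a < D' \<Longrightarrow> p*D'+a < d*(D'::nat)"
proof -
  assume "p < d" "a < D'"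
  hence "p*D'+a < p*D' + D'" by simp
  also have "\<dots> = (Suc p)*D'" by simp
  also have "\<dots> \<le> d*D'" using \<open>p<d\<close> by (intro mult_right_mono) auto
  finally show ?thesis .
qed

lemma blk_quad: assumes V: "V \<in> carrier_mat (d*D') (d*D')" and x: "x \<in> carrier_vec d" and y: "y \<in> carrier_vec D'"
  shows "quad (blk d D' V x) y = quad V (vec (d*D') (\<lambda>i. x$(i div D') * y$(i mod D')))"
proof -
  let ?z = "vec (d*D') (\<lambda>i. x$(i div D') * y$(i mod D'))"
  let ?G = "\<lambda>p a q b. cnj (x$p * y$a) * V$$(p*D'+a, q*D'+b) * (x$q * y$b)"
  have zi: "?z $ (p*D'+a) = x$p * y$a" if "p<d" "a<D'" for p a
    using that idx_lt[OF that] by simp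
  have "quad V ?z = (\<Sum>i<d*D'. \<Sum>j<d*D'. cnj (?z$i) * V$$(i,j) * ?z$j)" unfolding quad_def by simp
  also have "\<dots> = (\<Sum>p<d. \<Sum>a<D'. \<Sum>q<d. \<Sum>b<D'. ?G p a q b)"
    unfolding sum_prod_split[of _ d D']
    by (intro sum.cong refl, simp add: zi)
  also have "\<dots> = (\<Sum>a<D'. \<Sum>p<d. \<Sum>q<d. \<Sum>b<D'. ?G p a q b)" by (rule sum.swap)
  also have "\<dots> = (\<Sum>a<D'. \<Sum>p<d. \<Sum>b<D'. \<Sum>q<d. ?G p a q b)"
    by (rule sum.cong[OF refl], rule sum.cong[OF refl], rule sum.swap)
  also have "\<dots> = (\<Sum>a<D'. \<Sum>b<D'. \<Sum>p<d. \<Sum>q<d. ?G p a q b)"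
    by (rule sum.cong[OF refl], rule sum.swap)
  also have "\<dots> = quad (blk d D' V x) y"
    unfolding quad_def using y blk_carrier[of d D' V x]
    by (auto simp: blk_index sum_distrib_left sum_distrib_right ac_simps intro!: sum.cong)
  finally show ?thesis by simp
qed

lemma kvec_cons: "kvec (x # vs) = vec (dim_vec x * dim_vec (kvec vs))
     (\<lambda>i. x $ (i div dim_vec (kvec vs)) * kvec vs $ (i mod dim_vec (kvec vs)))" by simp

lemma blk_herm: assumes h: "\<forall>i<d*D'. \<forall>j<d*D'. V $$ (j,i) = cnj (V $$ (i,j))" and ab: "a < D'" "b < D'"
  shows "blk d D' V x $$ (b,a) = cnj (blk d D' V x $$ (a,b))"
proof -
  have "cnj (blk d D' V x $$ (a,b)) = (\<Sum>p<d. \<Sum>q<d. x$p * cnj (x$q) * cnj (V$$(p*D'+a, q*D'+b)))"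
    using ab by (simp add: blk_index)
  also have "\<dots> = (\<Sum>p<d. \<Sum>q<d. x$p * cnj (x$q) * V$$(q*D'+b, p*D'+a))"
  proof (intro sum.cong refl)
    fix p q assume "p \<in> {..<d}" "q \<in> {..<d}"
    hence "V$$(q*D'+b, p*D'+a) = cnj (V$$(p*D'+a, q*D'+b))"
      using h ab idx_lt by blast
    thus "x$p * cnj (x$q) * cnj (V$$(p*D'+a, q*D'+b)) = x$p * cnj (x$q) * V$$(q*D'+b, p*D'+a)" by simp
  qed
  also have "\<dots> = (\<Sum>q<d. \<Sum>p<d. x$p * cnj (x$q) * V$$(q*D'+b, p*D'+a))" by (rule sum.swap)
  also have "\<dots> = blk d D' V x $$ (b,a)" using ab by (simp add: blk_index ac_simps)
  finally show ?thesis by simp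
qed

lemma blk_unit: assumes "p < d" "a < D'" "b < D'"
  shows "blk d D' V (unit_vec d p) $$ (a,b) = V $$ (p*D'+a, p*D'+b)"
proof -
  have "blk d D' V (unit_vec d p) $$ (a,b) = (\<Sum>p'<d. \<Sum>q<d. cnj (unit_vec d p $p') * unit_vec d p $q * V$$(p'*D'+a, q*D'+b))"
    using assms by (simp add: blk_index)
  also have "\<dots> = (\<Sum>q<d. cnj (unit_vec d p $p) * unit_vec d p $q * V$$(p*D'+a, q*D'+b))"
    using assms(1) by (intro one_point_sum) auto
  also have "\<dots> = cnj (unit_vec d p $p) * unit_vec d p $p * V$$(p*D'+a, p*D'+b)"
    using assms(1) by (intro one_point_sum) auto
  finally show ?thesis using assms by simp
qed

lemma blk_two: assumes "p < d" "q < d" "p \<noteq> q" "a < D'" "b < D'"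
  and x: "x = vec d (\<lambda>i. if i = p then complex_of_real c else if i = q then complex_of_real c * w else 0)"
  shows "blk d D' V x $$ (a,b) = complex_of_real (c*c) * (V$$(p*D'+a, p*D'+b) + w * V$$(p*D'+a, q*D'+b)
     + cnj w * V$$(q*D'+a, p*D'+b) + cnj w * w * V$$(q*D'+a, q*D'+b))"
proof -
  have xp: "x $ p = complex_of_real c" and xq: "x $ q = complex_of_real c * w"
    and x0: "\<And>i. i < d \<Longrightarrow> i \<noteq> p \<Longrightarrow> i \<noteq> q \<Longrightarrow> x $ i = 0" using assms by auto
  have inner: "(\<Sum>q'<d. cnj (x$p') * x$q' * V$$(p'*D'+a, q'*D'+b)) =
     cnj (x$p') * x$p * V$$(p'*D'+a, p*D'+b) + cnj (x$p') * x$q * V$$(p'*D'+a, q*D'+b)" for p'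
    using assms(1-3) x0 by (intro two_point_sum) auto
  have "blk d D' V x $$ (a,b) = (\<Sum>p'<d. cnj (x$p') * x$p * V$$(p'*D'+a, p*D'+b) + cnj (x$p') * x$q * V$$(p'*D'+a, q*D'+b))"
    using assms(4,5) by (simp add: blk_index inner)
  also have "\<dots> = (cnj (x$p) * x$p * V$$(p*D'+a, p*D'+b) + cnj (x$p) * x$q * V$$(p*D'+a, q*D'+b))
     + (cnj (x$q) * x$p * V$$(q*D'+a, p*D'+b) + cnj (x$q) * x$q * V$$(q*D'+a, q*D'+b))"
    using assms(1-3) x0 by (intro two_point_sum) auto
  finally show ?thesis unfolding xp xq by (simp add: algebra_simps)
qed

lemma unitv_two: assumes "p < d" "q < d" "p \<noteq> q" "cmod w = 1"
  shows "unitv d (vec d (\<lambda>i. if i = p then complex_of_real (sqrt (1/2)) else if i = q then complex_of_real (sqrt (1/2)) * w else 0))"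
  (is "unitv d ?x")
proof -
  have "(\<Sum>i<d. (cmod (?x $ i))\<^sup>2) = (cmod (?x $ p))\<^sup>2 + (cmod (?x $ q))\<^sup>2"
    using assms(1-3) by (intro two_point_sum) auto
  also have "\<dots> = 1" using assms by (simp add: norm_mult power_mult_distrib)
  finally show ?thesis unfolding unitv_def by simp
qed

lemma unitv_unit: "p < d \<Longrightarrow> unitv d (unit_vec d p)"
proof -
  assume p: "p < d"
  have "(\<Sum>i<d. (cmod (unit_vec d p $ i))\<^sup>2) = (cmod (unit_vec d p $ p))\<^sup>2"
    using p by (intro one_point_sum) auto
  thus ?thesis using p unfolding unitv_def by simp
qed

lemma mtrace_blk: assumes "V \<in> carrier_mat (d*D') (d*D')"
  shows "mtrace V = (\<Sum>p<d. mtrace (blk d D' V (unit_vec d p)))"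
proof -
  have "mtrace V = (\<Sum>p<d. \<Sum>a<D'. V $$ (p*D'+a, p*D'+a))"
    using assms unfolding mtrace_def by (simp add: sum_prod_split)
  also have "\<dots> = (\<Sum>p<d. mtrace (blk d D' V (unit_vec d p)))"
  proof (rule sum.cong[OF refl])
    fix p assume p: "p \<in> {..<d}"
    have "mtrace (blk d D' V (unit_vec d p)) = (\<Sum>a<D'. blk d D' V (unit_vec d p) $$ (a,a))"
      unfolding mtrace_def blk_def by simp
    also have "\<dots> = (\<Sum>a<D'. V $$ (p*D'+a, p*D'+a))" using p by (intro sum.cong refl) (simp add: blk_unit)
    finally show "(\<Sum>a<D'. V $$ (p*D'+a, p*D'+a)) = mtrace (blk d D' V (unit_vec d p))" by simp
  qed
  finally show ?thesis .
qed

lemma mtrace_blk_sum: "mtrace (blk d D' V x) = (\<Sum>a<D'. blk d D' V x $$ (a,a))"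
  unfolding mtrace_def blk_def by simp

lemma four_combo: fixes A B C F :: complex and c :: real assumes "c*c = 1/2"
  defines "E \<equiv> \<lambda>w. complex_of_real (c*c) * (A + w * B + cnj w * C + cnj w * w * F)"
  shows "2 * B = E 1 - \<i> * E \<i> - E (-1) + \<i> * E (-\<i>)"
  unfolding E_def assms(1) by (simp add: complex_eq_iff field_simps)

lemma four_re: fixes A B C F :: complex and c :: real assumes "c*c = 1/2"
  defines "E \<equiv> \<lambda>w. complex_of_real (c*c) * (A + w * B + cnj w * C + cnj w * w * F)"
  shows "Re (E 1) + Re (E \<i>) + Re (E (-1)) + Re (E (-\<i>)) = 2 * Re (A + F)"
  unfolding E_def assms(1) by (simp add: field_simps)

lemma norm4: fixes x y z w :: complex shows "cmod (x - y - z + w) \<le> cmod x + cmod y + cmod z + cmod w"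
proof -
  have "cmod (x - y - z + w) \<le> cmod (x - y - z) + cmod w" by (rule norm_triangle_ineq)
  moreover have "cmod (x - y - z) \<le> cmod (x - y) + cmod z" by (rule norm_triangle_ineq4)
  moreover have "cmod (x-y) \<le> cmod x + cmod y" by (rule norm_triangle_ineq4)
  ultimately show ?thesis by linarith
qed

lemma bp_bound: "bp dims V \<Longrightarrow> a < prod_list dims \<Longrightarrow> b < prod_list dims \<Longrightarrow> cmod (V $$ (a,b)) \<le> Re (mtrace V)"
proof (induction dims arbitrary: V a b)
  case Nil
  have V: "V \<in> carrier_mat 1 1" and h: "V $$ (0,0) = cnj (V $$ (0,0))"
    and q: "0 \<le> Re (quad V (kvec []))" using Nil(1) unfolding bp_def by auto
  have ab: "a = 0" "b = 0" using Nil by auto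
  have "quad V (kvec []) = V $$ (0,0)" unfolding quad_def by simp
  hence r: "0 \<le> Re (V $$ (0,0))" using q by simp
  have "Im (V $$ (0,0)) = 0" using h by (metis cnj.simps(2) equation_minus_iff minus_zero neg_equal_zero)
  hence "cmod (V $$ (0,0)) = Re (V $$ (0,0))" using r by (simp add: cmod_eq_Re)
  moreover have "mtrace V = V $$ (0,0)" using V unfolding mtrace_def by simp
  ultimately show ?case using ab by simp
next
  case (Cons d ds)
  define D' where "D' = prod_list ds"
  have Vc: "V \<in> carrier_mat (d*D') (d*D')" and h: "\<forall>i<d*D'. \<forall>j<d*D'. V $$ (j,i) = cnj (V $$ (i,j))"
    and q: "\<forall>vs. length vs = length (d#ds) \<and> (\<forall>k<length (d#ds). unitv ((d#ds)!k) (vs!k))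
          \<longrightarrow> 0 \<le> Re (quad V (kvec vs))"
  proof -
    have "bp (d # ds) V" by (rule Cons(2))
    hence "V \<in> carrier_mat (d*D') (d*D') \<and> (\<forall>i<d*D'. \<forall>j<d*D'. V $$ (j,i) = cnj (V $$ (i,j)))
      \<and> (\<forall>vs. length vs = length (d#ds) \<and> (\<forall>k<length (d#ds). unitv ((d#ds)!k) (vs!k))
          \<longrightarrow> 0 \<le> Re (quad V (kvec vs)))" unfolding bp_def D'_def prod_list.Cons by blast
    thus "V \<in> carrier_mat (d*D') (d*D')" "\<forall>i<d*D'. \<forall>j<d*D'. V $$ (j,i) = cnj (V $$ (i,j))"
      "\<forall>vs. length vs = length (d#ds) \<and> (\<forall>k<length (d#ds). unitv ((d#ds)!k) (vs!k))
          \<longrightarrow> 0 \<le> Re (quad V (kvec vs))" by blast+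
  qed
  have bpblk: "bp ds (blk d D' V x)" if x: "unitv d x" for x
    unfolding bp_def D'_def[symmetric]
  proof (intro conjI allI impI)
    show "blk d D' V x \<in> carrier_mat D' D'" by (rule blk_carrier)
    show "blk d D' V x $$ (j, i) = cnj (blk d D' V x $$ (i, j))" if "i < D'" "j < D'" for i j
      using blk_herm[OF h that] .
    fix vs assume vs: "length vs = length ds \<and> (\<forall>k<length ds. unitv (ds ! k) (vs ! k))"
    have dk: "dim_vec (kvec vs) = D'" unfolding D'_def using vs by (intro dim_kvec') (auto simp: unitv_def)
    have xc: "x \<in> carrier_vec d" using x unfolding unitv_def by auto
    have kc: "kvec vs \<in> carrier_vec D'" using dk by auto
    have "quad (blk d D' V x) (kvec vs) = quad V (kvec (x # vs))"
      unfolding blk_quad[OF Vc xc kc] kvec_cons dk using xc by simp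
    moreover have "0 \<le> Re (quad V (kvec (x # vs)))"
    proof (rule q[rule_format], rule conjI)
      show "length (x # vs) = length (d#ds)" using vs by simp
      show "\<forall>k<length (d#ds). unitv ((d # ds) ! k) ((x # vs) ! k)"
      proof (intro allI impI)
        fix k assume "k < length (d#ds)"
        thus "unitv ((d # ds) ! k) ((x # vs) ! k)" using vs x by (cases k) auto
      qed
    qed
    ultimately show "0 \<le> Re (quad (blk d D' V x) (kvec vs))" by simp
  qed
  have IH: "cmod (blk d D' V x $$ (a',b')) \<le> Re (mtrace (blk d D' V x))"
    if "unitv d x" "a' < D'" "b' < D'" for x a' b'
    using Cons.IH[OF bpblk[OF that(1)]] that(2,3) unfolding D'_def by blast
  have a: "a < d*D'" and b: "b < d*D'" using Cons(3,4) unfolding D'_def by auto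
  hence Dpos: "0 < D'" by (metis mult_0_right not_less_zero neq0_conv)
  define p where "p = a div D'"
  define q' where "q' = b div D'"
  define a' where "a' = a mod D'"
  define b' where "b' = b mod D'"
  have pd: "p < d" "q' < d" using a b unfolding p_def q'_def by (simp_all add: less_mult_imp_div_less)
  have ab': "a' < D'" "b' < D'" using Dpos unfolding a'_def b'_def by auto
  have aeq: "a = p*D'+a'" "b = q'*D'+b'" unfolding p_def a'_def q'_def b'_def by simp_all
  let ?t = "\<lambda>p. Re (mtrace (blk d D' V (unit_vec d p)))"
  have nonneg: "\<forall>p<d. 0 \<le> ?t p"
  proof (intro allI impI)
    fix p assume "p < d"
    have "cmod (blk d D' V (unit_vec d p) $$ (0,0)) \<le> ?t p"
      using IH[OF unitv_unit[OF \<open>p<d\<close>] Dpos Dpos] .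
    thus "0 \<le> ?t p" using norm_ge_zero order_trans by blast
  qed
  have trV: "Re (mtrace V) = (\<Sum>p<d. ?t p)" unfolding mtrace_blk[OF Vc] by (simp add: Re_sum)
  show ?case
  proof (cases "p = q'")
    case True
    have "V $$ (a,b) = blk d D' V (unit_vec d p) $$ (a',b')" unfolding aeq True
      using blk_unit[OF pd(2) ab'] by simp
    hence "cmod (V $$ (a,b)) \<le> ?t p" using IH[OF unitv_unit[OF pd(1)] ab'] by simp
    also have "\<dots> \<le> (\<Sum>p<d. ?t p)" using nonneg pd(1) by (intro member_le_sum) auto
    finally show ?thesis using trV by simp
  next
    case False
    define c where "c = sqrt (1/2::real)"
    have cc: "c * c = 1/2" unfolding c_def by simp
    define X where "X = (\<lambda>w. vec d (\<lambda>i. if i = p then complex_of_real c else if i = q' then complex_of_real c * w else 0))"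
    have uX: "unitv d (X w)" if "cmod w = 1" for w
      unfolding X_def c_def using unitv_two[OF pd False that] .
    let ?A = "\<lambda>a'' b''. V$$(p*D'+a'', p*D'+b'')"
    let ?B = "\<lambda>a'' b''. V$$(p*D'+a'', q'*D'+b'')"
    let ?C = "\<lambda>a'' b''. V$$(q'*D'+a'', p*D'+b'')"
    let ?F = "\<lambda>a'' b''. V$$(q'*D'+a'', q'*D'+b'')"
    have bX: "blk d D' V (X w) $$ (a'',b'') = complex_of_real (c*c) * (?A a'' b'' + w * ?B a'' b'' + cnj w * ?C a'' b'' + cnj w * w * ?F a'' b'')"
      if "a'' < D'" "b'' < D'" for w a'' b''
      by (rule blk_two[OF pd False that]) (simp add: X_def)
    let ?E = "\<lambda>w. blk d D' V (X w) $$ (a',b')"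
    have "2 * V $$ (a,b) = ?E 1 - \<i> * ?E \<i> - ?E (-1) + \<i> * ?E (-\<i>)"
      unfolding bX[OF ab'] aeq using four_combo[OF cc] by simp
    hence "cmod (2 * V $$ (a,b)) \<le> cmod (?E 1) + cmod (\<i> * ?E \<i>) + cmod (?E (-1)) + cmod (\<i> * ?E (-\<i>))"
      using norm4 by metis
    hence "2 * cmod (V $$ (a,b)) \<le> cmod (?E 1) + cmod (?E \<i>) + cmod (?E (-1)) + cmod (?E (-\<i>))"
      by (simp add: norm_mult)
    also have "\<dots> \<le> Re (mtrace (blk d D' V (X 1))) + Re (mtrace (blk d D' V (X \<i>)))
        + Re (mtrace (blk d D' V (X (-1)))) + Re (mtrace (blk d D' V (X (-\<i>))))"
      by (intro add_mono IH uX ab') auto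
    also have "\<dots> = (\<Sum>a''<D'. Re (blk d D' V (X 1) $$ (a'',a'')) + Re (blk d D' V (X \<i>) $$ (a'',a''))
        + Re (blk d D' V (X (-1)) $$ (a'',a'')) + Re (blk d D' V (X (-\<i>)) $$ (a'',a'')))"
      unfolding mtrace_blk_sum by (simp add: Re_sum sum.distrib)
    also have "\<dots> = (\<Sum>a''<D'. 2 * Re (?A a'' a'' + ?F a'' a''))"
      by (intro sum.cong refl, simp only: bX lessThan_iff, rule four_re[OF cc])
    also have "\<dots> = 2 * (?t p + ?t q')"
      unfolding mtrace_blk_sum using pd by (simp add: blk_unit sum_distrib_left Re_sum sum.distrib)
    also have "\<dots> \<le> 2 * (\<Sum>p<d. ?t p)" using two_le_sum[OF pd False nonneg] by simp
    finally show ?thesis using trV by simp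
  qed
qed




lemma product_separable: assumes "product_state dims \<tau>" shows "separable dims \<tau>"
proof -
  obtain \<sigma>s where l: "length \<sigma>s = length dims" and d: "\<forall>k<length dims. density_op (dims!k) (\<sigma>s!k)"
    and t: "\<tau> = kron_list \<sigma>s" using assms unfolding product_state_def by auto
  have c: "\<tau> \<in> carrier_mat (prod_list dims) (prod_list dims)" unfolding t
    using l d by (intro kron_list_carrier) (auto simp: density_op_def)
  show ?thesis unfolding separable_def
    by (rule conjI[OF c], rule exI[of _ 1], rule exI[of _ "\<lambda>_. 1"], rule exI[of _ "\<lambda>_. \<tau>"])
       (simp add: assms)
qed

lemma kvec_carrier: assumes "length vs = length dims" "\<forall>k<length dims. unitv (dims!k) (vs!k)"
  shows "kvec vs \<in> carrier_vec (prod_list dims)"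
  using dim_kvec'[OF assms(1)] assms(2) unfolding unitv_def carrier_vec_def by auto

lemma EW_bp: assumes "entanglement_witness dims W" shows "bp dims W"
proof -
  have Wc: "W \<in> carrier_mat (prod_list dims) (prod_list dims)" and h: "hermitian_mat W"
    and s: "\<forall>\<sigma>. separable dims \<sigma> \<longrightarrow> 0 \<le> Re (mtrace (W * \<sigma>))"
    using assms unfolding entanglement_witness_def by auto
  have q: "0 \<le> Re (quad W (kvec vs))"
    if vs: "length vs = length dims" "\<forall>k<length dims. unitv (dims!k) (vs!k)" for vs
  proof -
    have ps: "product_state dims (kron_list (map outer vs))" unfolding product_state_def
      using vs unitv_density by (intro exI[of _ "map outer vs"]) auto
    have "0 \<le> Re (mtrace (W * kron_list (map outer vs)))"
      using s product_separable[OF ps] by blast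
    thus ?thesis unfolding kron_outer mtrace_outer[OF Wc kvec_carrier[OF vs]] .
  qed
  show ?thesis unfolding bp_def using Wc q h[unfolded hermitian_iff[OF Wc]] by blast
qed

lemma NEW_entry: assumes "normalized_EW dims W" "a < prod_list dims" "b < prod_list dims"
  shows "cmod (W $$ (a,b)) \<le> 1"
  using bp_bound[OF EW_bp, of dims W a b] assms unfolding normalized_EW_def by simp

lemma density_bp: assumes "density_op D \<rho>" shows "bp [D] \<rho>"
proof -
  have c: "\<rho> \<in> carrier_mat D D" and h: "hermitian_mat \<rho>"
    and p: "\<forall>v \<in> carrier_vec D. 0 \<le> Re ((\<rho> *\<^sub>v v) \<bullet>c v)" using assms unfolding density_op_def by auto
  have q: "0 \<le> Re (quad \<rho> (kvec vs))" if vs: "length vs = 1" "unitv D (vs!0)" for vs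
  proof -
    obtain v where v: "vs = [v]" using vs(1) by (cases vs) auto
    have vc: "v \<in> carrier_vec D" using vs(2) v unfolding unitv_def by auto
    have "kvec vs = v" unfolding v by (rule eq_vecI) (insert vc, auto)
    moreover have "0 \<le> Re ((\<rho> *\<^sub>v v) \<bullet>c v)" using p vc by blast
    ultimately show ?thesis using quad_mulv[OF c vc] by simp
  qed
  have q': "\<forall>vs. length vs = length [D] \<and> (\<forall>k<length [D]. unitv ([D]!k) (vs!k)) \<longrightarrow> 0 \<le> Re (quad \<rho> (kvec vs))"
    using q by simp
  show ?thesis unfolding bp_def prod_list.Cons prod_list.Nil mult_1_right using c h[unfolded hermitian_iff[OF c]] q' by blast
qed

lemma density_entry: assumes "density_op D \<rho>" "a < D" "b < D"
  shows "cmod (\<rho> $$ (a,b)) \<le> 1"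
  using bp_bound[OF density_bp[OF assms(1)], of a b] assms unfolding density_op_def by simp

lemma mtrace_kron: assumes "A \<in> carrier_mat n n" "B \<in> carrier_mat m m"
  shows "mtrace (kron A B) = mtrace A * mtrace B"
proof -
  have "mtrace (kron A B) = (\<Sum>i<n*m. kron A B $$ (i,i))" unfolding mtrace_def using assms by simp
  also have "\<dots> = (\<Sum>p<n. \<Sum>q<m. A $$ (p,p) * B $$ (q,q))" unfolding sum_prod_split
    using assms idx_lt by (intro sum.cong refl) (simp add: kron_index)
  also have "\<dots> = mtrace A * mtrace B" unfolding mtrace_def using assms by (simp add: sum_product)
  finally show ?thesis .
qed

lemma mtrace_kron_list: assumes "length \<sigma>s = length dims" "\<forall>k<length dims. density_op (dims!k) (\<sigma>s!k)"
  shows "mtrace (kron_list \<sigma>s) = 1"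
  using assms
proof (induction \<sigma>s arbitrary: dims)
  case Nil thus ?case by (simp add: mtrace_def)
next
  case (Cons s ss)
  then obtain d ds where dims: "dims = d # ds" by (cases dims) auto
  have l: "length ss = length ds" using Cons(2) dims by simp
  have dd: "\<forall>k<length ds. density_op (ds!k) (ss!k)"
  proof (intro allI impI)
    fix k assume "k < length ds" thus "density_op (ds!k) (ss!k)" using Cons(3)[rule_format, of "Suc k"] dims by simp
  qed
  have s: "density_op d s" using Cons(3)[rule_format, of 0] dims by simp
  have kc: "kron_list ss \<in> carrier_mat (prod_list ds) (prod_list ds)"
    using l dd by (intro kron_list_carrier) (auto simp: density_op_def)
  show ?case using mtrace_kron[OF _ kc, of s d] s Cons.IH[OF l dd] by (simp add: density_op_def)
qed

lemma product_trace: "product_state dims \<tau> \<Longrightarrow> mtrace \<tau> = 1"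
  unfolding product_state_def using mtrace_kron_list by blast

lemma product_carrier: "product_state dims \<tau> \<Longrightarrow> \<tau> \<in> carrier_mat (prod_list dims) (prod_list dims)"
  unfolding product_state_def density_op_def by (auto intro!: kron_list_carrier)

lemma separable_trace: assumes "separable dims \<tau>" shows "mtrace \<tau> = 1"
proof -
  have c: "\<tau> \<in> carrier_mat (prod_list dims) (prod_list dims)" using assms unfolding separable_def by blast
  obtain m :: nat and p t where pt: "\<forall>j<m. 0 \<le> p j \<and> product_state dims (t j)" and s1: "(\<Sum>j<m. p j) = 1"
    and e: "\<forall>a < prod_list dims. \<forall>b < prod_list dims. \<tau> $$ (a,b) = (\<Sum>j<m. complex_of_real (p j) * t j $$ (a,b))"
    using assms unfolding separable_def by blast
  have "mtrace \<tau> = (\<Sum>a<prod_list dims. \<Sum>j<m. complex_of_real (p j) * t j $$ (a,a))"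
    unfolding mtrace_def using c e by simp
  also have "\<dots> = (\<Sum>j<m. complex_of_real (p j) * mtrace (t j))"
  proof (subst sum.swap, rule sum.cong[OF refl])
    fix j assume "j \<in> {..<m}"
    hence "dim_row (t j) = prod_list dims" using pt product_carrier by blast
    thus "(\<Sum>a<prod_list dims. complex_of_real (p j) * t j $$ (a, a)) = complex_of_real (p j) * mtrace (t j)"
      unfolding mtrace_def by (simp add: sum_distrib_left)
  qed
  also have "\<dots> = (\<Sum>j<m. complex_of_real (p j))" using pt product_trace by (intro sum.cong refl) auto
  also have "\<dots> = 1" using s1 by (metis of_real_1 of_real_sum)
  finally show ?thesis .
qed




lemma subseq_conv: fixes f :: "nat \<Rightarrow> 'i \<Rightarrow> complex"
  assumes "finite S" "\<forall>k. \<forall>i\<in>S. cmod (f k i) \<le> B"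
  shows "\<exists>r. strict_mono r \<and> (\<forall>i\<in>S. \<exists>l. (\<lambda>k. f (r k) i) \<longlonglongrightarrow> l)"
  using assms
proof (induction S rule: finite_induct)
  case empty
  show ?case by (rule exI[of _ "\<lambda>x. x"]) (simp add: strict_mono_def)
next
  case (insert x S)
  obtain r where r: "strict_mono r" and c: "\<forall>i\<in>S. \<exists>l. (\<lambda>k. f (r k) i) \<longlonglongrightarrow> l"
    using insert by blast
  have "\<forall>n. cmod (f (r n) x) \<le> B" using insert(4) by blast
  from Bolzano_Weierstrass_complex_disc[OF this] obtain g :: "nat \<Rightarrow> nat" and z where g: "strict_mono g"
    and gz: "\<forall>e>0. \<exists>N. \<forall>n\<ge>N. cmod (f (r (g n)) x - z) < e" by blast
  have lx: "(\<lambda>n. f (r (g n)) x) \<longlonglongrightarrow> z" using gz by (intro LIMSEQ_I) auto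
  have "\<forall>i\<in>insert x S. \<exists>l. (\<lambda>k. f ((r \<circ> g) k) i) \<longlonglongrightarrow> l"
  proof
    fix i assume "i \<in> insert x S"
    show "\<exists>l. (\<lambda>k. f ((r \<circ> g) k) i) \<longlonglongrightarrow> l"
    proof (cases "i = x")
      case True thus ?thesis using lx by auto
    next
      case False
      then obtain l where "(\<lambda>k. f (r k) i) \<longlonglongrightarrow> l" using c \<open>i \<in> insert x S\<close> by auto
      from LIMSEQ_subseq_LIMSEQ[OF this g] show ?thesis by (auto simp: o_def)
    qed
  qed
  thus ?case using strict_mono_o[OF r g] by blast
qed

definition emat :: "nat \<Rightarrow> nat \<Rightarrow> nat \<Rightarrow> complex mat" where
  "emat D a b = mat D D (\<lambda>(i,j). if (i,j) = (a,b) then 1 else 0)"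

definition ssum :: "nat \<Rightarrow> complex mat \<Rightarrow> real" where
  "ssum D X = (\<Sum>a<D. \<Sum>b<D. cmod (X $$ (a,b)))"

lemma ssum_pairs: "ssum D X = (\<Sum>(a,b)\<in>{..<D}\<times>{..<D}. cmod (X $$ (a,b)))"
  unfolding ssum_def by (rule sum.cartesian_product)

lemma ssum_nonneg: "0 \<le> ssum D X" unfolding ssum_def by (intro sum_nonneg) auto

lemma ssum_entry: "a < D \<Longrightarrow> b < D \<Longrightarrow> cmod (X $$ (a,b)) \<le> ssum D X"
proof -
  assume "a < D" "b < D"
  hence "(\<lambda>(a,b). cmod (X $$ (a,b))) (a,b) \<le> (\<Sum>(a,b)\<in>{..<D}\<times>{..<D}. cmod (X $$ (a,b)))"
    by (intro member_le_sum) auto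
  thus ?thesis unfolding ssum_pairs by simp
qed

lemma norm_partial: assumes N: "mat_norm D N" and X: "X \<in> carrier_mat D D"
  and T: "finite T" "T \<subseteq> {..<D}\<times>{..<D}"
  shows "N (mat D D (\<lambda>(i,j). if (i,j) \<in> T then X $$ (i,j) else 0)) \<le> (\<Sum>(a,b)\<in>T. cmod (X $$ (a,b)) * N (emat D a b))"
  using T
proof (induction T rule: finite_induct)
  case empty
  have z: "mat D D (\<lambda>(i,j). if (i,j) \<in> {} then X $$ (i,j) else 0) = 0\<^sub>m D D" by (rule eq_matI) auto
  have "N (0\<^sub>m D D) = 0" using N unfolding mat_norm_def by auto
  thus ?case unfolding z by simp
next
  case (insert t T)
  obtain a b where t: "t = (a,b)" by (cases t)
  have ab: "a < D" "b < D" using insert(4) t by auto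
  let ?M = "\<lambda>T. mat D D (\<lambda>(i,j). if (i,j) \<in> T then X $$ (i,j) else 0)"
  have eq: "?M (insert t T) = ?M T + (X $$ (a,b)) \<cdot>\<^sub>m emat D a b"
    using insert(2) by (intro eq_matI) (auto simp: emat_def t)
  have Nt: "\<forall>A \<in> carrier_mat D D. \<forall>B \<in> carrier_mat D D. N (A + B) \<le> N A + N B"
    and Ns: "\<forall>A \<in> carrier_mat D D. \<forall>c. N (c \<cdot>\<^sub>m A) = cmod c * N A" using N unfolding mat_norm_def by auto
  have "N (?M (insert t T)) \<le> N (?M T) + N ((X $$ (a,b)) \<cdot>\<^sub>m emat D a b)"
    unfolding eq using Nt by (auto simp: emat_def)
  also have "N ((X $$ (a,b)) \<cdot>\<^sub>m emat D a b) = cmod (X $$ (a,b)) * N (emat D a b)"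
    using Ns by (auto simp: emat_def)
  also have "N (?M T) \<le> (\<Sum>(a,b)\<in>T. cmod (X $$ (a,b)) * N (emat D a b))"
    by (rule insert.IH) (use insert(4) in blast)
  finally show ?case using insert(1,2) t by simp
qed

lemma norm_upper: assumes N: "mat_norm D N"
  shows "\<exists>K\<ge>0. \<forall>X\<in>carrier_mat D D. N X \<le> K * ssum D X"
proof -
  define K where "K = (\<Sum>(a,b)\<in>{..<D}\<times>{..<D}. N (emat D a b))"
  have Nn: "\<forall>A \<in> carrier_mat D D. 0 \<le> N A" using N unfolding mat_norm_def by auto
  have Ke: "N (emat D a b) \<le> K" if "a < D" "b < D" for a b
    unfolding K_def using that Nn
    by (intro member_le_sum[of "(a,b)" _ "\<lambda>(a,b). N (emat D a b)", simplified]) (auto simp: emat_def)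
  have K0: "0 \<le> K" unfolding K_def using Nn by (intro sum_nonneg) (auto simp: emat_def)
  have "N X \<le> K * ssum D X" if X: "X \<in> carrier_mat D D" for X
  proof -
    have "X = mat D D (\<lambda>(i,j). if (i,j) \<in> {..<D}\<times>{..<D} then X $$ (i,j) else 0)"
      using X by (intro eq_matI) auto
    hence "N X \<le> (\<Sum>(a,b)\<in>{..<D}\<times>{..<D}. cmod (X $$ (a,b)) * N (emat D a b))"
      using norm_partial[OF N X, of "{..<D}\<times>{..<D}"] by simp
    also have "\<dots> \<le> (\<Sum>(a,b)\<in>{..<D}\<times>{..<D}. cmod (X $$ (a,b)) * K)"
      using Ke by (intro sum_mono) (auto intro!: mult_left_mono)
    also have "\<dots> = K * ssum D X" unfolding ssum_pairs by (simp add: sum_distrib_left case_prod_unfold ac_simps)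
    finally show ?thesis .
  qed
  thus ?thesis using K0 by blast
qed

lemma ssum_tendsto: assumes "\<forall>a<D. \<forall>b<D. (\<lambda>k. X k $$ (a,b)) \<longlonglongrightarrow> L $$ (a,b)"
  shows "(\<lambda>k. ssum D (X k)) \<longlonglongrightarrow> ssum D L"
  unfolding ssum_def using assms by (intro tendsto_sum tendsto_norm) auto

lemma norm_equiv: assumes N: "mat_norm D N" shows "\<exists>C\<ge>0. \<forall>X\<in>carrier_mat D D. ssum D X \<le> C * N X"
proof (rule ccontr)
  assume ne: "\<not> ?thesis"
  have Nn: "\<forall>A \<in> carrier_mat D D. 0 \<le> N A" and N0: "\<forall>A \<in> carrier_mat D D. N A = 0 \<longleftrightarrow> A = 0\<^sub>m D D"
    and Nt: "\<forall>A \<in> carrier_mat D D. \<forall>B \<in> carrier_mat D D. N (A + B) \<le> N A + N B"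
    and Ns: "\<forall>A \<in> carrier_mat D D. \<forall>c. N (c \<cdot>\<^sub>m A) = cmod c * N A" using N unfolding mat_norm_def by auto
  have "\<forall>k::nat. \<exists>X. X \<in> carrier_mat D D \<and> (real k + 1) * N X < ssum D X"
  proof
    fix k :: nat
    show "\<exists>X. X \<in> carrier_mat D D \<and> (real k + 1) * N X < ssum D X"
    proof (rule ccontr)
      assume "\<not> ?thesis"
      hence "\<forall>X\<in>carrier_mat D D. ssum D X \<le> (real k + 1) * N X" by (auto simp: not_less)
      moreover have "0 \<le> real k + 1" by simp
      ultimately show False using ne by blast
    qed
  qed
  then obtain Xs where Xs: "\<And>k. Xs k \<in> carrier_mat D D" "\<And>k. (real k + 1) * N (Xs k) < ssum D (Xs k)" by metis
  have sp: "0 < ssum D (Xs k)" for k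
    using Xs[of k] Nn by (meson le_less_trans mult_nonneg_nonneg of_nat_0_le_iff zero_le_one add_nonneg_nonneg)
  define Y where "Y k = complex_of_real (1 / ssum D (Xs k)) \<cdot>\<^sub>m Xs k" for k
  have Yc: "Y k \<in> carrier_mat D D" for k unfolding Y_def using Xs by simp
  have Ye: "Y k $$ (a,b) = complex_of_real (1 / ssum D (Xs k)) * Xs k $$ (a,b)" if "a < D" "b < D" for k a b
    unfolding Y_def using that carrier_matD[OF Xs(1)[of k]] by simp
  have sY: "ssum D (Y k) = 1" for k
  proof -
    have "ssum D (Y k) = (\<Sum>a<D. \<Sum>b<D. (1 / ssum D (Xs k)) * cmod (Xs k $$ (a,b)))"
      unfolding ssum_def[of D "Y k"] using sp[of k] by (intro sum.cong refl) (simp add: Ye norm_mult norm_divide)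
    also have "\<dots> = (1 / ssum D (Xs k)) * ssum D (Xs k)" unfolding ssum_def[of D "Xs k"] by (simp add: sum_distrib_left)
    finally show ?thesis using sp[of k] by simp
  qed
  have NY: "N (Y k) < 1 / (real k + 1)" for k
  proof -
    have "N (Y k) = (1 / ssum D (Xs k)) * N (Xs k)" unfolding Y_def using Ns Xs sp[of k] by (simp add: less_imp_le norm_divide)
    also have "\<dots> < 1 / (real k + 1)" using Xs(2)[of k] sp[of k] by (simp add: field_simps)
    finally show ?thesis .
  qed
  have bnd: "\<forall>k. \<forall>i\<in>{..<D}\<times>{..<D}. cmod (Y k $$ i) \<le> 1"
  proof (intro allI ballI)
    fix k i assume "i \<in> {..<D}\<times>{..<D}"
    then obtain a b where "i = (a,b)" "a < D" "b < D" by blast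
    thus "cmod (Y k $$ i) \<le> 1" using ssum_entry[of a D b "Y k"] sY[of k] by simp
  qed
  obtain r where r: "strict_mono r" and cv: "\<forall>i\<in>{..<D}\<times>{..<D}. \<exists>l. (\<lambda>k. Y (r k) $$ i) \<longlonglongrightarrow> l"
    using subseq_conv[OF _ bnd] by blast
  from bchoice[OF cv] obtain lf where lf: "\<forall>i\<in>{..<D}\<times>{..<D}. (\<lambda>k. Y (r k) $$ i) \<longlonglongrightarrow> lf i" by blast
  define L where "L = mat D D lf"
  have Lc: "L \<in> carrier_mat D D" unfolding L_def by simp
  have Le: "\<forall>a<D. \<forall>b<D. (\<lambda>k. Y (r k) $$ (a,b)) \<longlonglongrightarrow> L $$ (a,b)" unfolding L_def using lf by auto
  have "(\<lambda>k. ssum D (Y (r k))) \<longlonglongrightarrow> ssum D L" by (rule ssum_tendsto[OF Le])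
  hence sL: "ssum D L = 1" using sY by (simp add: LIMSEQ_const_iff)
  obtain K where K: "K \<ge> 0" "\<forall>X\<in>carrier_mat D D. N X \<le> K * ssum D X" using norm_upper[OF N] by blast
  have ub: "N L \<le> K * ssum D (L - Y (r k)) + 1 / (real (r k) + 1)" for k
  proof -
    have "L = (L - Y (r k)) + Y (r k)" using Lc Yc[of "r k"] by (intro eq_matI) auto
    moreover have mc: "L - Y (r k) \<in> carrier_mat D D" using Yc[of "r k"] by (rule minus_carrier_mat)
    moreover have "N ((L - Y (r k)) + Y (r k)) \<le> N (L - Y (r k)) + N (Y (r k))" using Nt mc Yc[of "r k"] by blast
    ultimately have "N L \<le> N (L - Y (r k)) + N (Y (r k))" by simp
    also have "N (L - Y (r k)) \<le> K * ssum D (L - Y (r k))" using K(2) mc by blast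
    also have "N (Y (r k)) \<le> 1 / (real (r k) + 1)" using NY[of "r k"] by simp
    finally show ?thesis by simp
  qed
  have t1: "(\<lambda>k. ssum D (L - Y (r k))) \<longlonglongrightarrow> ssum D (0\<^sub>m D D)"
  proof (rule ssum_tendsto, intro allI impI)
    fix a b assume ab: "a < D" "b < D"
    have "(\<lambda>k. L $$ (a,b) - Y (r k) $$ (a,b)) \<longlonglongrightarrow> L $$ (a,b) - L $$ (a,b)"
      using Le ab by (intro tendsto_diff) auto
    moreover have "(L - Y (r k)) $$ (a,b) = L $$ (a,b) - Y (r k) $$ (a,b)" for k
      using ab carrier_matD[OF Yc[of "r k"]] by simp
    ultimately show "(\<lambda>k. (L - Y (r k)) $$ (a,b)) \<longlonglongrightarrow> 0\<^sub>m D D $$ (a,b)"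
      using ab by simp
  qed
  have z0: "ssum D (0\<^sub>m D D) = 0" unfolding ssum_def by simp
  have t2: "(\<lambda>k. 1 / (real (r k) + 1)) \<longlonglongrightarrow> 0"
  proof -
    have "(\<lambda>n. inverse (real (Suc n))) \<longlonglongrightarrow> 0" by (rule LIMSEQ_inverse_real_of_nat)
    from LIMSEQ_subseq_LIMSEQ[OF this r] show ?thesis by (simp add: o_def divide_inverse add.commute)
  qed
  have "(\<lambda>k. K * ssum D (L - Y (r k)) + 1 / (real (r k) + 1)) \<longlonglongrightarrow> K * 0 + 0"
    using t1 t2 z0 by (intro tendsto_add tendsto_mult tendsto_const) auto
  hence "N L \<le> K * 0 + 0" using ub by (intro LIMSEQ_le[OF tendsto_const]) auto
  hence "N L \<le> 0" by simp
  hence "N L = 0" using Nn Lc by force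
  hence "L = 0\<^sub>m D D" using N0 Lc by blast
  thus False using sL z0 by simp
qed




definition Fv :: "nat list \<Rightarrow> complex mat \<Rightarrow> real" where
  "Fv dims \<rho> = (INF W \<in> {W. normalized_EW dims W}. Re (mtrace (W * \<rho>)))"

lemma we_Fv: "witnessed_ent dims \<rho> = max 0 (- Fv dims \<rho>)"
  unfolding witnessed_ent_def Fv_def ..

lemma NEW_carrier: "normalized_EW dims W \<Longrightarrow> W \<in> carrier_mat (prod_list dims) (prod_list dims)"
  unfolding normalized_EW_def entanglement_witness_def by auto

lemma trace_bound: assumes W: "normalized_EW dims W" and X: "X \<in> carrier_mat (prod_list dims) (prod_list dims)"
  shows "cmod (mtrace (W * X)) \<le> ssum (prod_list dims) X"
proof -
  let ?D = "prod_list dims"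
  have Wc: "W \<in> carrier_mat ?D ?D" using NEW_carrier[OF W] .
  have "cmod (mtrace (W * X)) = cmod (\<Sum>i<?D. \<Sum>j<?D. W $$ (i,j) * X $$ (j,i))" unfolding mtrace_mult[OF Wc X] ..
  also have "\<dots> \<le> (\<Sum>i<?D. \<Sum>j<?D. cmod (W $$ (i,j) * X $$ (j,i)))"
    by (rule order_trans[OF norm_sum], rule sum_mono, rule norm_sum)
  also have "\<dots> \<le> (\<Sum>i<?D. \<Sum>j<?D. cmod (X $$ (j,i)))"
  proof (intro sum_mono)
    fix i j assume "i \<in> {..<?D}" "j \<in> {..<?D}"
    hence "cmod (W $$ (i,j)) \<le> 1" using NEW_entry[OF W] by auto
    thus "cmod (W $$ (i,j) * X $$ (j,i)) \<le> cmod (X $$ (j,i))"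
      unfolding norm_mult by (simp add: mult_left_le_one_le)
  qed
  also have "\<dots> = ssum ?D X" unfolding ssum_def by (rule sum.swap)
  finally show ?thesis .
qed

lemma density_ssum: assumes "density_op D \<rho>" shows "ssum D \<rho> \<le> real D * real D"
proof -
  have "ssum D \<rho> \<le> (\<Sum>a<D. \<Sum>b<D. 1)" unfolding ssum_def
    using density_entry[OF assms] by (intro sum_mono) auto
  thus ?thesis by simp
qed

lemma density_pos: "density_op D \<rho> \<Longrightarrow> 0 < D"
  unfolding density_op_def mtrace_def by (cases D) auto

lemma NEW_lower: assumes W: "normalized_EW dims W" and r: "density_op (prod_list dims) \<rho>"
  shows "- (real (prod_list dims) * real (prod_list dims)) \<le> Re (mtrace (W * \<rho>))"
proof -
  have rc: "\<rho> \<in> carrier_mat (prod_list dims) (prod_list dims)" using r unfolding density_op_def by auto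
  have "- Re (mtrace (W * \<rho>)) \<le> cmod (mtrace (W * \<rho>))" by (metis abs_Re_le_cmod abs_le_iff)
  also have "\<dots> \<le> ssum (prod_list dims) \<rho>" by (rule trace_bound[OF W rc])
  also have "\<dots> \<le> real (prod_list dims) * real (prod_list dims)" by (rule density_ssum[OF r])
  finally show ?thesis by simp
qed

lemma NEW_ex: assumes "0 < prod_list dims"
  shows "normalized_EW dims (complex_of_real (1 / real (prod_list dims)) \<cdot>\<^sub>m 1\<^sub>m (prod_list dims))"
proof -
  define D where "D = prod_list dims"
  have D0: "0 < D" using assms unfolding D_def .
  let ?D = "D"
  let ?c = "complex_of_real (1 / real ?D)"
  let ?W = "?c \<cdot>\<^sub>m 1\<^sub>m ?D"
  have Wc: "?W \<in> carrier_mat ?D ?D" by simp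
  have h: "hermitian_mat ?W" unfolding hermitian_iff[OF Wc] by auto
  have "mtrace ?W = (\<Sum>i<?D. ?c)" unfolding mtrace_def by simp
  also have "\<dots> = of_nat D * ?c" by simp
  also have "\<dots> = 1" using D0 by simp
  finally have tW: "mtrace ?W = 1" .
  have ew: "0 \<le> Re (mtrace (?W * \<sigma>))" if s: "separable dims \<sigma>" for \<sigma>
  proof -
    have sc: "\<sigma> \<in> carrier_mat ?D ?D" using s unfolding separable_def D_def by auto
    have "mtrace (?W * \<sigma>) = (\<Sum>i<?D. \<Sum>j<?D. ?W $$ (i,j) * \<sigma> $$ (j,i))" by (rule mtrace_mult[OF Wc sc])
    also have "\<dots> = (\<Sum>i<?D. ?c * \<sigma> $$ (i,i))"
    proof (rule sum.cong[OF refl])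
      fix i assume i: "i \<in> {..<?D}"
      show "(\<Sum>j<?D. ?W $$ (i,j) * \<sigma> $$ (j,i)) = ?c * \<sigma> $$ (i,i)"
        using i by (subst one_point_sum[of i]) auto
    qed
    also have "\<dots> = ?c * mtrace \<sigma>" unfolding mtrace_def using sc by (simp add: sum_distrib_left)
    also have "\<dots> = ?c" using separable_trace[OF s] by simp
    finally show ?thesis by simp
  qed
  show ?thesis unfolding normalized_EW_def entanglement_witness_def D_def[symmetric] using Wc h tW ew by blast
qed

lemma Fv_bdd: assumes "density_op (prod_list dims) \<rho>"
  shows "bdd_below ((\<lambda>W. Re (mtrace (W * \<rho>))) ` {W. normalized_EW dims W})"
  using NEW_lower[OF _ assms] by (intro bdd_belowI) auto

lemma Fv_le: "normalized_EW dims W \<Longrightarrow> density_op (prod_list dims) \<rho> \<Longrightarrow> Fv dims \<rho> \<le> Re (mtrace (W * \<rho>))"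
  unfolding Fv_def by (rule cINF_lower[OF Fv_bdd]) auto

lemma Fv_ge: assumes "density_op (prod_list dims) \<rho>" "\<And>W. normalized_EW dims W \<Longrightarrow> c \<le> Re (mtrace (W * \<rho>))"
  shows "c \<le> Fv dims \<rho>"
proof -
  have "normalized_EW dims (complex_of_real (1 / real (prod_list dims)) \<cdot>\<^sub>m 1\<^sub>m (prod_list dims))"
    using NEW_ex density_pos[OF assms(1)] by blast
  hence ne: "{W. normalized_EW dims W} \<noteq> {}" by blast
  show ?thesis unfolding Fv_def by (rule cINF_greatest[OF ne]) (use assms(2) in auto)
qed

lemma mtrace_lin: assumes W: "W \<in> carrier_mat n n" and A: "A \<in> carrier_mat n n" and B: "B \<in> carrier_mat n n"
  shows "mtrace (W * (c \<cdot>\<^sub>m A + d \<cdot>\<^sub>m B)) = c * mtrace (W * A) + d * mtrace (W * B)"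
    "mtrace (W * (A - B)) = mtrace (W * A) - mtrace (W * B)"
proof -
  have C: "c \<cdot>\<^sub>m A + d \<cdot>\<^sub>m B \<in> carrier_mat n n" using A B by simp
  have E: "A - B \<in> carrier_mat n n" using minus_carrier_mat[OF B] .
  show "mtrace (W * (c \<cdot>\<^sub>m A + d \<cdot>\<^sub>m B)) = c * mtrace (W * A) + d * mtrace (W * B)"
    unfolding mtrace_mult[OF W C] mtrace_mult[OF W A] mtrace_mult[OF W B] using A B
    by (simp add: sum_distrib_left sum.distrib algebra_simps)
  show "mtrace (W * (A - B)) = mtrace (W * A) - mtrace (W * B)"
    unfolding mtrace_mult[OF W E] mtrace_mult[OF W A] mtrace_mult[OF W B] using A B
    by (simp add: sum_subtractf algebra_simps)
qed

lemma part_v: assumes r: "density_op (prod_list dims) \<rho>" and s: "density_op (prod_list dims) \<sigma>"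
  and t: "0 \<le> t" "t \<le> 1"
  shows "witnessed_ent dims (complex_of_real t \<cdot>\<^sub>m \<rho> + complex_of_real (1 - t) \<cdot>\<^sub>m \<sigma>)
        \<le> t * witnessed_ent dims \<rho> + (1 - t) * witnessed_ent dims \<sigma>"
proof -
  let ?D = "prod_list dims"
  let ?M = "complex_of_real t \<cdot>\<^sub>m \<rho> + complex_of_real (1 - t) \<cdot>\<^sub>m \<sigma>"
  have rc: "\<rho> \<in> carrier_mat ?D ?D" and sc: "\<sigma> \<in> carrier_mat ?D ?D" using r s unfolding density_op_def by auto
  have lin: "Re (mtrace (W * ?M)) = t * Re (mtrace (W * \<rho>)) + (1 - t) * Re (mtrace (W * \<sigma>))"
    if W: "normalized_EW dims W" for W
    unfolding mtrace_lin(1)[OF NEW_carrier[OF W] rc sc] by simp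
  have ge: "t * Fv dims \<rho> + (1 - t) * Fv dims \<sigma> \<le> Fv dims ?M"
  proof -
    have "{W. normalized_EW dims W} \<noteq> {}" using NEW_ex density_pos[OF r] by blast
    have "t * Fv dims \<rho> + (1 - t) * Fv dims \<sigma> \<le> Re (mtrace (W * ?M))" if W: "normalized_EW dims W" for W
      unfolding lin[OF W] using Fv_le[OF W r] Fv_le[OF W s] t
      by (intro add_mono mult_left_mono) auto
    moreover have "normalized_EW dims (complex_of_real (1 / real ?D) \<cdot>\<^sub>m 1\<^sub>m ?D)"
      using NEW_ex density_pos[OF r] by blast
    ultimately show ?thesis unfolding Fv_def by (intro cINF_greatest) auto
  qed
  have a1: "t * (- Fv dims \<rho>) \<le> t * max 0 (- Fv dims \<rho>)" using t by (intro mult_left_mono) auto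
  have a2: "(1-t) * (- Fv dims \<sigma>) \<le> (1-t) * max 0 (- Fv dims \<sigma>)" using t by (intro mult_left_mono) auto
  have a3: "0 \<le> t * max 0 (- Fv dims \<rho>)" "0 \<le> (1-t) * max 0 (- Fv dims \<sigma>)" using t by auto
  have a1': "- (t * Fv dims \<rho>) \<le> t * max 0 (- Fv dims \<rho>)" using a1 by simp
  have a2': "- ((1-t) * Fv dims \<sigma>) \<le> (1-t) * max 0 (- Fv dims \<sigma>)" using a2 by simp
  show ?thesis unfolding we_Fv max.bounded_iff using ge a1' a2' a3 by (intro conjI) linarith+
qed

lemma INF_lip: assumes ne: "A \<noteq> {}" and bf: "bdd_below (f ` A)" and bg: "bdd_below (g ` A)"
  and d: "\<And>a. a \<in> A \<Longrightarrow> \<bar>f a - g a\<bar> \<le> (e::real)"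
  shows "\<bar>(INF a\<in>A. f a) - (INF a\<in>A. g a)\<bar> \<le> e"
proof -
  have 1: "(INF a\<in>A. f a) - e \<le> (INF a\<in>A. g a)"
  proof (rule cINF_greatest[OF ne])
    fix a assume a: "a \<in> A"
    have "(INF a\<in>A. f a) \<le> f a" by (rule cINF_lower[OF bf a])
    thus "(INF a\<in>A. f a) - e \<le> g a" using d[OF a] by linarith
  qed
  have 2: "(INF a\<in>A. g a) - e \<le> (INF a\<in>A. f a)"
  proof (rule cINF_greatest[OF ne])
    fix a assume a: "a \<in> A"
    have "(INF a\<in>A. g a) \<le> g a" by (rule cINF_lower[OF bg a])
    thus "(INF a\<in>A. g a) - e \<le> f a" using d[OF a] by linarith
  qed
  show ?thesis using 1 2 by linarith
qed

lemma part_iv: assumes N: "mat_norm (prod_list dims) N"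
  shows "\<exists>C::real. 0 \<le> C \<and> (\<forall>(\<epsilon>::real) \<rho> \<sigma>. 0 \<le> \<epsilon>
        \<and> density_op (prod_list dims) \<rho> \<and> density_op (prod_list dims) \<sigma> \<and> N (\<rho> - \<sigma>) \<le> \<epsilon> \<longrightarrow>
        \<bar>witnessed_ent dims \<rho> - witnessed_ent dims \<sigma>\<bar> \<le> C * \<epsilon>)"
proof -
  let ?D = "prod_list dims"
  obtain C where C: "C \<ge> 0" "\<forall>X\<in>carrier_mat ?D ?D. ssum ?D X \<le> C * N X" using norm_equiv[OF N] by blast
  have "\<bar>witnessed_ent dims \<rho> - witnessed_ent dims \<sigma>\<bar> \<le> C * \<epsilon>"
    if "0 \<le> \<epsilon>" "density_op ?D \<rho>" "density_op ?D \<sigma>" "N (\<rho> - \<sigma>) \<le> \<epsilon>" for \<epsilon> \<rho> \<sigma>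
  proof -
    have rc: "\<rho> \<in> carrier_mat ?D ?D" and sc: "\<sigma> \<in> carrier_mat ?D ?D" using that unfolding density_op_def by auto
    have dc: "\<rho> - \<sigma> \<in> carrier_mat ?D ?D" using sc by (rule minus_carrier_mat)
    have "\<bar>Fv dims \<rho> - Fv dims \<sigma>\<bar> \<le> C * \<epsilon>" unfolding Fv_def
    proof (rule INF_lip)
      show "{W. normalized_EW dims W} \<noteq> {}" using NEW_ex density_pos[OF that(2)] by blast
      show "bdd_below ((\<lambda>W. Re (mtrace (W * \<rho>))) ` {W. normalized_EW dims W})" by (rule Fv_bdd[OF that(2)])
      show "bdd_below ((\<lambda>W. Re (mtrace (W * \<sigma>))) ` {W. normalized_EW dims W})" by (rule Fv_bdd[OF that(3)])
      fix W assume "W \<in> {W. normalized_EW dims W}"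
      hence W: "normalized_EW dims W" by simp
      have "\<bar>Re (mtrace (W * \<rho>)) - Re (mtrace (W * \<sigma>))\<bar> = \<bar>Re (mtrace (W * (\<rho> - \<sigma>)))\<bar>"
        unfolding mtrace_lin(2)[OF NEW_carrier[OF W] rc sc] by simp
      also have "\<dots> \<le> cmod (mtrace (W * (\<rho> - \<sigma>)))" by (rule abs_Re_le_cmod)
      also have "\<dots> \<le> ssum ?D (\<rho> - \<sigma>)" by (rule trace_bound[OF W dc])
      also have "\<dots> \<le> C * N (\<rho> - \<sigma>)" using C dc by blast
      also have "\<dots> \<le> C * \<epsilon>" using that(4) C(1) by (rule mult_left_mono)
      finally show "\<bar>Re (mtrace (W * \<rho>)) - Re (mtrace (W * \<sigma>))\<bar> \<le> C * \<epsilon>" .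
    qed
    thus ?thesis unfolding we_Fv by linarith
  qed
  thus ?thesis using C(1) by blast
qed

lemma part_i_easy: assumes r: "density_op (prod_list dims) \<sigma>" and s: "separable dims \<sigma>"
  shows "witnessed_ent dims \<sigma> = 0"
proof -
  have "0 \<le> Fv dims \<sigma>"
    using r by (rule Fv_ge) (use s in \<open>auto simp: normalized_EW_def entanglement_witness_def\<close>)
  thus ?thesis unfolding we_Fv by simp
qed




lemma adj_adj: fixes A :: "complex mat" shows "A \<in> carrier_mat n m \<Longrightarrow> mat_adjoint (mat_adjoint A) = A"
  by (intro eq_matI) (auto simp: adj_index)

lemma adj_mult: fixes A B :: "complex mat" assumes A: "A \<in> carrier_mat n m" and B: "B \<in> carrier_mat m l"
  shows "mat_adjoint (A * B) = mat_adjoint B * mat_adjoint A"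
proof (rule eq_matI)
  fix i j assume i: "i < dim_row (mat_adjoint B * mat_adjoint A)" and j: "j < dim_col (mat_adjoint B * mat_adjoint A)"
  have i': "i < l" and j': "j < n" using i j A B by auto
  have e: "(A*B) $$ (j,i) = (\<Sum>k<m. A$$(j,k) * B$$(k,i))" using mult_index[OF A B j' i'] .
  have "mat_adjoint (A * B) $$ (i,j) = cnj ((A*B) $$ (j,i))" by (rule adj_index) (use A B i' j' in auto)
  also have "\<dots> = cnj (\<Sum>k<m. A $$ (j,k) * B $$ (k,i))" unfolding e ..
  also have "\<dots> = (\<Sum>k<m. mat_adjoint B $$ (i,k) * mat_adjoint A $$ (k,j))"
    using i' j' A B by (auto intro!: sum.cong simp: ac_simps)
  also have "\<dots> = (mat_adjoint B * mat_adjoint A) $$ (i,j)"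
    by (rule sym, rule mult_index[OF adj_carrier[OF B] adj_carrier[OF A] i' j'])
  finally show "mat_adjoint (A * B) $$ (i,j) = (mat_adjoint B * mat_adjoint A) $$ (i,j)" .
qed (insert A B, auto)

lemma unitary_adj: "unitary_mat d u \<Longrightarrow> unitary_mat d (mat_adjoint u)"
  unfolding unitary_mat_def using adj_adj by (metis adj_carrier)

lemma kron_carrier: "A \<in> carrier_mat n n \<Longrightarrow> B \<in> carrier_mat m m \<Longrightarrow> kron A B \<in> carrier_mat (n*m) (n*m)"
  by auto

lemma div_mod_idx: "q < (m::nat) \<Longrightarrow> (p*m+q) div m = p" "q < m \<Longrightarrow> (p*m+q) mod m = q"
  by auto

lemma kron_mult: assumes A: "A \<in> carrier_mat n n" and C: "C \<in> carrier_mat n n"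
  and B: "B \<in> carrier_mat m m" and E: "E \<in> carrier_mat m m"
  shows "kron A B * kron C E = kron (A * C) (B * E)"
proof (rule eq_matI)
  fix i j assume i: "i < dim_row (kron (A * C) (B * E))" and j: "j < dim_col (kron (A * C) (B * E))"
  have i': "i < n*m" and j': "j < n*m" using i j A B C E by auto
  have m0: "0 < m" using i' by (metis mult_0_right not_less_zero neq0_conv)
  have dv: "i div m < n" "j div m < n" using i' j' by (simp_all add: less_mult_imp_div_less)
  have md: "i mod m < m" "j mod m < m" using m0 by auto
  have "(kron A B * kron C E) $$ (i,j) = (\<Sum>k<n*m. kron A B $$ (i,k) * kron C E $$ (k,j))"
    using i' j' A B C E by (intro mult_index) auto
  also have "\<dots> = (\<Sum>p<n. \<Sum>q<m. (A $$ (i div m, p) * C $$ (p, j div m)) * (B $$ (i mod m, q) * E $$ (q, j mod m)))"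
    unfolding sum_prod_split
  proof (intro sum.cong refl)
    fix p q assume p: "p \<in> {..<n}" and q: "q \<in> {..<m}"
    have k: "p*m+q < n*m" using p q idx_lt by auto
    have dm: "(p*m+q) div m = p" "(p*m+q) mod m = q" using q by auto
    have "kron A B $$ (i, p*m+q) = A $$ (i div m, p) * B $$ (i mod m, q)"
      using kron_index[of i A B "p*m+q"] i' k A B dm by simp
    moreover have "kron C E $$ (p*m+q, j) = C $$ (p, j div m) * E $$ (q, j mod m)"
      using kron_index[of "p*m+q" C E j] j' k C E dm by simp
    ultimately show "kron A B $$ (i, p*m+q) * kron C E $$ (p*m+q, j) =
      (A $$ (i div m, p) * C $$ (p, j div m)) * (B $$ (i mod m, q) * E $$ (q, j mod m))" by simp
  qed
  also have "\<dots> = (\<Sum>p<n. A $$ (i div m, p) * C $$ (p, j div m)) * (\<Sum>q<m. B $$ (i mod m, q) * E $$ (q, j mod m))"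
    by (simp add: sum_product)
  also have "\<dots> = (A * C) $$ (i div m, j div m) * (B * E) $$ (i mod m, j mod m)"
    using dv md by (simp add: mult_index[OF A C] mult_index[OF B E])
  also have "\<dots> = kron (A * C) (B * E) $$ (i,j)"
    using i' j' A B C E by (simp add: kron_index)
  finally show "(kron A B * kron C E) $$ (i,j) = kron (A * C) (B * E) $$ (i,j)" .
qed (insert A B C E, auto)

lemma kron_adj: assumes A: "A \<in> carrier_mat n n" and B: "B \<in> carrier_mat m m"
  shows "mat_adjoint (kron A B) = kron (mat_adjoint A) (mat_adjoint B)"
proof (rule eq_matI)
  fix i j assume i: "i < dim_row (kron (mat_adjoint A) (mat_adjoint B))" and j: "j < dim_col (kron (mat_adjoint A) (mat_adjoint B))"
  have i': "i < n*m" and j': "j < n*m" using i j A B by auto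
  have m0: "0 < m" using i' by (metis mult_0_right not_less_zero neq0_conv)
  have dv: "i div m < n" "j div m < n" using i' j' by (simp_all add: less_mult_imp_div_less)
  have md: "i mod m < m" "j mod m < m" using m0 by auto
  show "mat_adjoint (kron A B) $$ (i,j) = kron (mat_adjoint A) (mat_adjoint B) $$ (i,j)"
    using i' j' A B dv md by (simp add: kron_index)
qed (insert A B, auto)

fun pmul :: "complex mat list \<Rightarrow> complex mat list \<Rightarrow> complex mat list" where
  "pmul (a # as) (b # bs) = (a * b) # pmul as bs"
| "pmul _ _ = []"

lemma pmul_length: "length (pmul as bs) = min (length as) (length bs)"
  by (induction as bs rule: pmul.induct) auto

lemma pmul_nth: "k < length as \<Longrightarrow> k < length bs \<Longrightarrow> pmul as bs ! k = as ! k * bs ! k"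
  by (induction as bs arbitrary: k rule: pmul.induct) (auto simp: nth_Cons split: nat.split)

definition lcar :: "nat list \<Rightarrow> complex mat list \<Rightarrow> bool" where
  "lcar dims As \<longleftrightarrow> length As = length dims \<and> (\<forall>k<length dims. As ! k \<in> carrier_mat (dims!k) (dims!k))"

lemma lcar_Cons: "lcar (d # ds) (A # As) \<longleftrightarrow> A \<in> carrier_mat d d \<and> lcar ds As"
  unfolding lcar_def by (auto simp: nth_Cons split: nat.split)

lemma lcar_kron: "lcar dims As \<Longrightarrow> kron_list As \<in> carrier_mat (prod_list dims) (prod_list dims)"
  unfolding lcar_def by (intro kron_list_carrier) auto

lemma lcar_pmul: "lcar dims As \<Longrightarrow> lcar dims Bs \<Longrightarrow> lcar dims (pmul As Bs)"
  unfolding lcar_def by (auto simp: pmul_length pmul_nth)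

lemma lcar_adj: "lcar dims As \<Longrightarrow> lcar dims (map mat_adjoint As)"
  unfolding lcar_def by (auto simp: adj_carrier)

lemma kron_list_pmul: "lcar dims As \<Longrightarrow> lcar dims Bs \<Longrightarrow> kron_list As * kron_list Bs = kron_list (pmul As Bs)"
proof (induction As arbitrary: Bs dims)
  case Nil
  then have "Bs = []" "dims = []" unfolding lcar_def by auto
  thus ?case by simp
next
  case (Cons A As)
  obtain d ds where dims: "dims = d # ds" using Cons(2) unfolding lcar_def by (cases dims) auto
  obtain B Bs' where Bs: "Bs = B # Bs'" using Cons(3) dims unfolding lcar_def by (cases Bs) auto
  have a: "A \<in> carrier_mat d d" "lcar ds As" using Cons(2) dims lcar_Cons by auto
  have b: "B \<in> carrier_mat d d" "lcar ds Bs'" using Cons(3) dims Bs lcar_Cons by auto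
  show ?case unfolding Bs kron_list.simps pmul.simps
    by (subst kron_mult[OF a(1) b(1) lcar_kron[OF a(2)] lcar_kron[OF b(2)]]) (simp add: Cons.IH[OF a(2) b(2)])
qed

lemma kron_list_adj: "lcar dims As \<Longrightarrow> kron_list (map mat_adjoint As) = mat_adjoint (kron_list As)"
proof (induction As arbitrary: dims)
  case Nil
  show ?case by (rule eq_matI) auto
next
  case (Cons A As)
  obtain d ds where dims: "dims = d # ds" using Cons(2) unfolding lcar_def by (cases dims) auto
  have a: "A \<in> carrier_mat d d" "lcar ds As" using Cons(2) dims lcar_Cons by auto
  show ?case using kron_adj[OF a(1) lcar_kron[OF a(2)]] Cons.IH[OF a(2)] by simp
qed

lemma kron_list_one: "lcar dims As \<Longrightarrow> (\<forall>k<length dims. As ! k = 1\<^sub>m (dims!k)) \<Longrightarrow> kron_list As = 1\<^sub>m (prod_list dims)"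
proof (induction As arbitrary: dims)
  case Nil
  then have "dims = []" unfolding lcar_def by auto
  thus ?case by simp
next
  case (Cons A As)
  obtain d ds where dims: "dims = d # ds" using Cons(2) unfolding lcar_def by (cases dims) auto
  have a: "A = 1\<^sub>m d" "lcar ds As" using Cons(2,3) dims lcar_Cons by auto
  have o: "\<forall>k<length ds. As ! k = 1\<^sub>m (ds!k)" using Cons(3) dims by auto
  have "kron (1\<^sub>m d) (1\<^sub>m (prod_list ds)) = 1\<^sub>m (d * prod_list ds)"
  proof (rule eq_matI)
    fix i j assume "i < dim_row (1\<^sub>m (d * prod_list ds))" "j < dim_col (1\<^sub>m (d * prod_list ds))"
    hence i: "i < d * prod_list ds" and j: "j < d * prod_list ds" by auto
    have m0: "0 < prod_list ds" using i by (metis mult_0_right not_less_zero neq0_conv)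
    have eqv: "(i div prod_list ds = j div prod_list ds \<and> i mod prod_list ds = j mod prod_list ds) = (i = j)"
      by (metis div_mult_mod_eq)
    show "kron (1\<^sub>m d) (1\<^sub>m (prod_list ds)) $$ (i, j) = 1\<^sub>m (d * prod_list ds) $$ (i, j)"
      using i j m0 eqv by (auto simp: kron_index less_mult_imp_div_less)
  qed auto
  thus ?case using a Cons.IH[OF a(2) o] dims by simp
qed




lemma adj_cscalar: fixes u :: "complex mat" assumes u: "u \<in> carrier_mat n n" and w: "w \<in> carrier_vec n" and v: "v \<in> carrier_vec n"
  shows "(mat_adjoint u *\<^sub>v w) \<bullet>c v = w \<bullet>c (u *\<^sub>v v)"
proof -
  have "(mat_adjoint u *\<^sub>v w) \<bullet>c v = (\<Sum>i<n. (\<Sum>j<n. cnj (u $$ (j,i)) * w $ j) * cnj (v $ i))"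
    using u w v by (auto simp: scalar_prod_def lessThan_atLeast0 intro!: sum.cong)
  also have "\<dots> = (\<Sum>i<n. \<Sum>j<n. w $ j * (cnj (u $$ (j,i)) * cnj (v $ i)))"
    by (simp add: sum_distrib_left sum_distrib_right ac_simps)
  also have "\<dots> = (\<Sum>j<n. \<Sum>i<n. w $ j * (cnj (u $$ (j,i)) * cnj (v $ i)))"
    by (rule sum.swap)
  also have "\<dots> = w \<bullet>c (u *\<^sub>v v)"
    using u w v by (auto simp: scalar_prod_def lessThan_atLeast0 sum_distrib_left intro!: sum.cong)
  finally show ?thesis .
qed

lemma local_density: fixes u \<rho> :: "complex mat" assumes u: "unitary_mat d u" and r: "density_op d \<rho>"
  shows "density_op d (mat_adjoint u * \<rho> * u)"
proof -
  have uc: "u \<in> carrier_mat d d" and uu: "u * mat_adjoint u = 1\<^sub>m d" using u unfolding unitary_mat_def by auto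
  have rc: "\<rho> \<in> carrier_mat d d" and rh: "hermitian_mat \<rho>" and rp: "\<forall>v \<in> carrier_vec d. 0 \<le> Re ((\<rho> *\<^sub>v v) \<bullet>c v)"
    and rt: "mtrace \<rho> = 1" using r unfolding density_op_def by auto
  have ac: "mat_adjoint u \<in> carrier_mat d d" using adj_carrier[OF uc] .
  have c: "mat_adjoint u * \<rho> * u \<in> carrier_mat d d" using ac rc uc by simp
  have "mat_adjoint (mat_adjoint u * \<rho> * u) = mat_adjoint u * mat_adjoint (mat_adjoint u * \<rho>)"
    by (rule adj_mult[OF mult_carrier_mat[OF ac rc] uc])
  also have "mat_adjoint (mat_adjoint u * \<rho>) = mat_adjoint \<rho> * mat_adjoint (mat_adjoint u)"
    by (rule adj_mult[OF ac rc])
  also have "\<dots> = \<rho> * u" using rh adj_adj[OF uc] unfolding hermitian_mat_def by simp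
  finally have h: "hermitian_mat (mat_adjoint u * \<rho> * u)" unfolding hermitian_mat_def using ac rc uc by simp
  have p: "0 \<le> Re (((mat_adjoint u * \<rho> * u) *\<^sub>v v) \<bullet>c v)" if v: "v \<in> carrier_vec d" for v
  proof -
    have uv: "u *\<^sub>v v \<in> carrier_vec d" using uc v by simp
    have "(mat_adjoint u * \<rho> * u) *\<^sub>v v = (mat_adjoint u * (\<rho> * u)) *\<^sub>v v" using ac rc uc by simp
    also have "\<dots> = mat_adjoint u *\<^sub>v ((\<rho> * u) *\<^sub>v v)" by (rule assoc_mult_mat_vec[OF ac mult_carrier_mat[OF rc uc] v])
    also have "(\<rho> * u) *\<^sub>v v = \<rho> *\<^sub>v (u *\<^sub>v v)" by (rule assoc_mult_mat_vec[OF rc uc v])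
    finally have "(mat_adjoint u * \<rho> * u) *\<^sub>v v = mat_adjoint u *\<^sub>v (\<rho> *\<^sub>v (u *\<^sub>v v))" .
    hence "((mat_adjoint u * \<rho> * u) *\<^sub>v v) \<bullet>c v = (\<rho> *\<^sub>v (u *\<^sub>v v)) \<bullet>c (u *\<^sub>v v)"
      using adj_cscalar[OF uc _ v, of "\<rho> *\<^sub>v (u *\<^sub>v v)"] rc uv by simp
    thus ?thesis using rp uv by simp
  qed
  have "mtrace (mat_adjoint u * \<rho> * u) = mtrace (u * (mat_adjoint u * \<rho>))"
    by (rule mtrace_comm[OF mult_carrier_mat[OF ac rc] uc])
  also have "u * (mat_adjoint u * \<rho>) = (u * mat_adjoint u) * \<rho>" using ac rc uc by simp
  also have "\<dots> = \<rho>" using uu rc by simp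
  finally have t: "mtrace (mat_adjoint u * \<rho> * u) = 1" using rt by simp
  show ?thesis unfolding density_op_def using c h p t by blast
qed

definition lunit :: "nat list \<Rightarrow> complex mat list \<Rightarrow> bool" where
  "lunit dims Vs \<longleftrightarrow> length Vs = length dims \<and> (\<forall>k<length dims. unitary_mat (dims!k) (Vs!k))"

lemma lunit_lcar: "lunit dims Vs \<Longrightarrow> lcar dims Vs"
  unfolding lunit_def lcar_def unitary_mat_def by auto

lemma lunit_adj: "lunit dims Vs \<Longrightarrow> lunit dims (map mat_adjoint Vs)"
  unfolding lunit_def using unitary_adj by auto

lemma map_adj_adj: "lcar dims Vs \<Longrightarrow> map mat_adjoint (map mat_adjoint Vs) = Vs"
  unfolding lcar_def by (intro nth_equalityI) (auto simp: adj_adj)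

lemma lunit_one: assumes "lunit dims Vs"
  shows "kron_list Vs * kron_list (map mat_adjoint Vs) = 1\<^sub>m (prod_list dims)"
    "kron_list (map mat_adjoint Vs) * kron_list Vs = 1\<^sub>m (prod_list dims)"
proof -
  have l: "lcar dims Vs" "lcar dims (map mat_adjoint Vs)" using assms lunit_lcar lunit_adj by auto
  show "kron_list Vs * kron_list (map mat_adjoint Vs) = 1\<^sub>m (prod_list dims)"
    unfolding kron_list_pmul[OF l]
    by (rule kron_list_one[OF lcar_pmul[OF l]])
       (use assms in \<open>auto simp: lunit_def unitary_mat_def pmul_nth\<close>)
  show "kron_list (map mat_adjoint Vs) * kron_list Vs = 1\<^sub>m (prod_list dims)"
    unfolding kron_list_pmul[OF l(2,1)]
    by (rule kron_list_one[OF lcar_pmul[OF l(2,1)]])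
       (use assms in \<open>auto simp: lunit_def unitary_mat_def pmul_nth\<close>)
qed

lemma product_transform: assumes V: "lunit dims Vs" and t: "product_state dims \<tau>"
  shows "product_state dims (kron_list (map mat_adjoint Vs) * \<tau> * kron_list Vs)"
proof -
  obtain \<sigma>s where l: "length \<sigma>s = length dims" and d: "\<forall>k<length dims. density_op (dims!k) (\<sigma>s!k)"
    and te: "\<tau> = kron_list \<sigma>s" using t unfolding product_state_def by auto
  have ls: "lcar dims \<sigma>s" using l d unfolding lcar_def density_op_def by auto
  have lv: "lcar dims Vs" "lcar dims (map mat_adjoint Vs)" using V lunit_lcar lunit_adj by auto
  let ?L = "pmul (pmul (map mat_adjoint Vs) \<sigma>s) Vs"
  have eq: "kron_list (map mat_adjoint Vs) * \<tau> * kron_list Vs = kron_list ?L"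
    unfolding te kron_list_pmul[OF lv(2) ls] kron_list_pmul[OF lcar_pmul[OF lv(2) ls] lv(1)] ..
  have len: "length ?L = length dims" using l V unfolding lunit_def by (simp add: pmul_length)
  have "density_op (dims!k) (?L ! k)" if k: "k < length dims" for k
  proof -
    have "?L ! k = mat_adjoint (Vs!k) * \<sigma>s!k * Vs!k" using k l V unfolding lunit_def by (simp add: pmul_nth pmul_length)
    thus ?thesis using local_density[of "dims!k" "Vs!k" "\<sigma>s!k"] V d k unfolding lunit_def by simp
  qed
  thus ?thesis unfolding product_state_def eq using len by blast
qed

lemma distrib3: fixes x z :: complex shows "x * (\<Sum>j<m. c j * y j) * z = (\<Sum>j<m. c j * (x * y j * z))"
  by (simp add: sum_distrib_left sum_distrib_right mult.assoc mult.left_commute)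

lemma triple_index: assumes A: "A \<in> carrier_mat n n" and X: "X \<in> carrier_mat n n" and B: "B \<in> carrier_mat n n"
  and a: "a < n" and b: "b < n"
  shows "(A * X * B) $$ (a,b) = (\<Sum>l<n. \<Sum>k<n. A $$ (a,l) * X $$ (l,k) * B $$ (k,b))"
proof -
  have "(A * X * B) $$ (a,b) = (\<Sum>k<n. (A * X) $$ (a,k) * B $$ (k,b))" using mult_index[OF mult_carrier_mat[OF A X] B a b] .
  also have "\<dots> = (\<Sum>k<n. \<Sum>l<n. A $$ (a,l) * X $$ (l,k) * B $$ (k,b))"
    using mult_index[OF A X a] by (simp add: sum_distrib_right)
  also have "\<dots> = (\<Sum>l<n. \<Sum>k<n. A $$ (a,l) * X $$ (l,k) * B $$ (k,b))" by (rule sum.swap)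
  finally show ?thesis .
qed

lemma sep_transform: assumes V: "lunit dims Vs" and s: "separable dims \<tau>"
  shows "separable dims (kron_list (map mat_adjoint Vs) * \<tau> * kron_list Vs)"
proof -
  let ?D = "prod_list dims"
  let ?A = "kron_list (map mat_adjoint Vs)"
  let ?B = "kron_list Vs"
  have lv: "lcar dims Vs" "lcar dims (map mat_adjoint Vs)" using V lunit_lcar lunit_adj by auto
  have Ac: "?A \<in> carrier_mat ?D ?D" and Bc: "?B \<in> carrier_mat ?D ?D" using lcar_kron lv by auto
  have c: "\<tau> \<in> carrier_mat ?D ?D" using s unfolding separable_def by blast
  obtain m :: nat and p t where pt: "\<forall>j<m. 0 \<le> p j \<and> product_state dims (t j)" and s1: "(\<Sum>j<m. p j) = 1"
    and e: "\<forall>a < ?D. \<forall>b < ?D. \<tau> $$ (a,b) = (\<Sum>j<m. complex_of_real (p j) * t j $$ (a,b))"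
    using s unfolding separable_def by blast
  have tc: "t j \<in> carrier_mat ?D ?D" if "j < m" for j using pt that product_carrier by blast
  have pt': "\<forall>j<m. 0 \<le> p j \<and> product_state dims (?A * t j * ?B)" using pt product_transform[OF V] by blast
  have e': "(?A * \<tau> * ?B) $$ (a,b) = (\<Sum>j<m. complex_of_real (p j) * (?A * t j * ?B) $$ (a,b))"
    if ab: "a < ?D" "b < ?D" for a b
  proof -
    have "(?A * \<tau> * ?B) $$ (a,b) = (\<Sum>l<?D. \<Sum>k<?D. ?A $$ (a,l) * \<tau> $$ (l,k) * ?B $$ (k,b))"
      by (rule triple_index[OF Ac c Bc ab])
    also have "\<dots> = (\<Sum>l<?D. \<Sum>k<?D. \<Sum>j<m. complex_of_real (p j) * (?A $$ (a,l) * t j $$ (l,k) * ?B $$ (k,b)))"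
    proof (intro sum.cong refl)
      fix l k assume "l \<in> {..<?D}" "k \<in> {..<?D}"
      hence "\<tau> $$ (l,k) = (\<Sum>j<m. complex_of_real (p j) * t j $$ (l,k))" using e by blast
      thus "?A $$ (a,l) * \<tau> $$ (l,k) * ?B $$ (k,b) = (\<Sum>j<m. complex_of_real (p j) * (?A $$ (a,l) * t j $$ (l,k) * ?B $$ (k,b)))"
        by (simp only: distrib3)
    qed
    also have "\<dots> = (\<Sum>l<?D. \<Sum>j<m. \<Sum>k<?D. complex_of_real (p j) * (?A $$ (a,l) * t j $$ (l,k) * ?B $$ (k,b)))"
      by (rule sum.cong[OF refl], rule sum.swap)
    also have "\<dots> = (\<Sum>j<m. \<Sum>l<?D. \<Sum>k<?D. complex_of_real (p j) * (?A $$ (a,l) * t j $$ (l,k) * ?B $$ (k,b)))"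
      by (rule sum.swap)
    also have "\<dots> = (\<Sum>j<m. complex_of_real (p j) * (?A * t j * ?B) $$ (a,b))"
    proof (rule sum.cong[OF refl])
      fix j assume "j \<in> {..<m}"
      hence "j < m" by simp
      hence "(?A * t j * ?B) $$ (a,b) = (\<Sum>l<?D. \<Sum>k<?D. ?A $$ (a,l) * t j $$ (l,k) * ?B $$ (k,b))"
        using triple_index[OF Ac tc Bc ab] by blast
      thus "(\<Sum>l<?D. \<Sum>k<?D. complex_of_real (p j) * (?A $$ (a,l) * t j $$ (l,k) * ?B $$ (k,b))) =
         complex_of_real (p j) * (?A * t j * ?B) $$ (a,b)" by (simp add: sum_distrib_left)
    qed
    finally show ?thesis .
  qed
  have c': "?A * \<tau> * ?B \<in> carrier_mat ?D ?D" using Ac c Bc by simp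
  show ?thesis unfolding separable_def
    by (rule conjI[OF c'], rule exI[of _ m], rule exI[of _ p], rule exI[of _ "\<lambda>j. ?A * t j * ?B"])
       (use pt' s1 e' in simp)
qed




lemma cyc: fixes U W U' X :: "complex mat"
  assumes c: "U \<in> carrier_mat n n" "W \<in> carrier_mat n n" "U' \<in> carrier_mat n n" "X \<in> carrier_mat n n"
  shows "mtrace (U * W * U' * X) = mtrace (W * (U' * X * U))"
proof -
  have "U * W * U' * X = (U * W) * (U' * X)" by (rule assoc_mult_mat[OF mult_carrier_mat[OF c(1,2)] c(3,4)])
  also have "\<dots> = U * (W * (U' * X))" by (rule assoc_mult_mat[OF c(1,2) mult_carrier_mat[OF c(3,4)]])
  finally have "U * W * U' * X = U * (W * (U' * X))" .
  hence "mtrace (U * W * U' * X) = mtrace (U * (W * (U' * X)))" by simp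
  also have "\<dots> = mtrace ((W * (U' * X)) * U)" using c by (intro mtrace_comm) auto
  also have "(W * (U' * X)) * U = W * (U' * X * U)" by (rule assoc_mult_mat[OF c(2) mult_carrier_mat[OF c(3,4)] c(1)])
  finally show ?thesis .
qed

lemma NEW_transform: assumes V: "lunit dims Vs" and W: "normalized_EW dims W"
  shows "normalized_EW dims (kron_list Vs * W * kron_list (map mat_adjoint Vs))"
proof -
  let ?D = "prod_list dims"
  let ?U = "kron_list Vs"
  let ?U' = "kron_list (map mat_adjoint Vs)"
  have lv: "lcar dims Vs" "lcar dims (map mat_adjoint Vs)" using V lunit_lcar lunit_adj by auto
  have Uc: "?U \<in> carrier_mat ?D ?D" and U'c: "?U' \<in> carrier_mat ?D ?D" using lcar_kron lv by auto
  have U'adj: "?U' = mat_adjoint ?U" by (rule kron_list_adj[OF lv(1)])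
  have Uadj: "mat_adjoint ?U' = ?U" unfolding U'adj by (rule adj_adj[OF Uc])
  have one: "?U * ?U' = 1\<^sub>m ?D" "?U' * ?U = 1\<^sub>m ?D" using lunit_one[OF V] by auto
  have Wc: "W \<in> carrier_mat ?D ?D" and Wh: "mat_adjoint W = W" and Wt: "mtrace W = 1"
    and Ws: "\<forall>\<sigma>. separable dims \<sigma> \<longrightarrow> 0 \<le> Re (mtrace (W * \<sigma>))"
    using W unfolding normalized_EW_def entanglement_witness_def hermitian_mat_def by auto
  let ?X = "?U * W * ?U'"
  have Xc: "?X \<in> carrier_mat ?D ?D" using Uc Wc U'c by simp
  have "mat_adjoint ?X = mat_adjoint ?U' * mat_adjoint (?U * W)"
    by (rule adj_mult[OF mult_carrier_mat[OF Uc Wc] U'c])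
  also have "mat_adjoint (?U * W) = mat_adjoint W * mat_adjoint ?U" by (rule adj_mult[OF Uc Wc])
  finally have "mat_adjoint ?X = ?U * (W * ?U')" unfolding Uadj Wh U'adj[symmetric] .
  hence h: "hermitian_mat ?X" unfolding hermitian_mat_def using Uc Wc U'c by simp
  have "mtrace ?X = mtrace (?U' * (?U * W))" by (rule mtrace_comm[OF mult_carrier_mat[OF Uc Wc] U'c])
  also have "?U' * (?U * W) = (?U' * ?U) * W" using Uc Wc U'c by simp
  also have "\<dots> = W" using one Wc by simp
  finally have t: "mtrace ?X = 1" using Wt by simp
  have ew: "0 \<le> Re (mtrace (?X * \<sigma>))" if s: "separable dims \<sigma>" for \<sigma>
  proof -
    have sc: "\<sigma> \<in> carrier_mat ?D ?D" using s unfolding separable_def by blast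
    have "mtrace (?X * \<sigma>) = mtrace (W * (?U' * \<sigma> * ?U))" by (rule cyc[OF Uc Wc U'c sc])
    moreover have "separable dims (?U' * \<sigma> * ?U)" by (rule sep_transform[OF V s])
    ultimately show ?thesis using Ws by simp
  qed
  show ?thesis unfolding normalized_EW_def entanglement_witness_def using Xc h t ew by blast
qed

lemma part_ii: assumes V: "lunit dims Us" and r: "density_op (prod_list dims) \<sigma>"
  shows "witnessed_ent dims \<sigma> = witnessed_ent dims (kron_list (map mat_adjoint Us) * \<sigma> * kron_list Us)"
proof -
  let ?D = "prod_list dims"
  let ?U = "kron_list Us"
  let ?U' = "kron_list (map mat_adjoint Us)"
  let ?N = "{W. normalized_EW dims W}"
  let ?h = "\<lambda>W. ?U * W * ?U'"
  have lv: "lcar dims Us" "lcar dims (map mat_adjoint Us)" using V lunit_lcar lunit_adj by auto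
  have Uc: "?U \<in> carrier_mat ?D ?D" and U'c: "?U' \<in> carrier_mat ?D ?D" using lcar_kron lv by auto
  have one: "?U * ?U' = 1\<^sub>m ?D" "?U' * ?U = 1\<^sub>m ?D" using lunit_one[OF V] by auto
  have sc: "\<sigma> \<in> carrier_mat ?D ?D" using r unfolding density_op_def by auto
  have img: "?h ` ?N = ?N"
  proof
    show "?h ` ?N \<subseteq> ?N" using NEW_transform[OF V] by auto
    show "?N \<subseteq> ?h ` ?N"
    proof
      fix W' assume "W' \<in> ?N"
      hence W': "normalized_EW dims W'" by simp
      have V': "lunit dims (map mat_adjoint Us)" by (rule lunit_adj[OF V])
      have "normalized_EW dims (?U' * W' * kron_list (map mat_adjoint (map mat_adjoint Us)))"
        by (rule NEW_transform[OF V' W'])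
      hence n: "normalized_EW dims (?U' * W' * ?U)" unfolding map_adj_adj[OF lv(1)] .
      have Wc: "W' \<in> carrier_mat ?D ?D" using NEW_carrier[OF W'] .
      have UW: "?U' * W' \<in> carrier_mat ?D ?D" using U'c Wc by simp
      have "?U * (?U' * W' * ?U) = ?U * (?U' * W') * ?U" by (rule assoc_mult_mat[OF Uc UW Uc, symmetric])
      also have "?U * (?U' * W') = ?U * ?U' * W'" by (rule assoc_mult_mat[OF Uc U'c Wc, symmetric])
      also have "\<dots> = W'" using one Wc by simp
      finally have e1: "?U * (?U' * W' * ?U) = W' * ?U" .
      have "?h (?U' * W' * ?U) = W' * ?U * ?U'" unfolding e1 ..
      also have "\<dots> = W' * (?U * ?U')" by (rule assoc_mult_mat[OF Wc Uc U'c])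
      also have "\<dots> = W'" using one Wc by simp
      finally have e: "?h (?U' * W' * ?U) = W'" .
      show "W' \<in> ?h ` ?N" by (rule image_eqI[where x="?U' * W' * ?U"]) (use e n in simp_all)
    qed
  qed
  have "Fv dims (?U' * \<sigma> * ?U) = Inf ((\<lambda>W. Re (mtrace (W * (?U' * \<sigma> * ?U)))) ` ?N)"
    unfolding Fv_def ..
  also have "(\<lambda>W. Re (mtrace (W * (?U' * \<sigma> * ?U)))) ` ?N = (\<lambda>W. Re (mtrace (W * \<sigma>))) ` (?h ` ?N)"
    unfolding image_image using cyc[OF Uc _ U'c sc] NEW_carrier by (intro image_cong refl) auto
  also have "\<dots> = (\<lambda>W. Re (mtrace (W * \<sigma>))) ` ?N" unfolding img ..
  finally have "Fv dims (?U' * \<sigma> * ?U) = Fv dims \<sigma>" unfolding Fv_def .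
  thus ?thesis unfolding we_Fv by simp
qed




lemma lindep: fixes f :: "'j \<Rightarrow> 'i \<Rightarrow> real"
  assumes "finite I" "finite J" "card I < card J"
  shows "\<exists>c. (\<exists>j\<in>J. c j \<noteq> 0) \<and> (\<forall>i\<in>I. (\<Sum>j\<in>J. c j * f j i) = 0)"
  using assms
proof (induction I arbitrary: J f rule: finite_induct)
  case empty
  then obtain j where "j \<in> J" by fastforce
  thus ?case by (intro exI[of _ "\<lambda>_. 1"]) auto
next
  case (insert i0 I)
  have cI: "card (insert i0 I) = Suc (card I)" using insert(1,2) by simp
  show ?case
  proof (cases "\<forall>j\<in>J. f j i0 = 0")
    case True
    obtain c where c: "\<exists>j\<in>J. c j \<noteq> 0" "\<forall>i\<in>I. (\<Sum>j\<in>J. c j * f j i) = 0"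
      using insert.IH[OF insert(4), of f] insert(5) cI by auto
    have "\<forall>i\<in>insert i0 I. (\<Sum>j\<in>J. c j * f j i) = 0" using c(2) True by simp
    thus ?thesis using c(1) by blast
  next
    case False
    then obtain j0 where j0: "j0 \<in> J" "f j0 i0 \<noteq> 0" by blast
    define J' where "J' = J - {j0}"
    have fJ': "finite J'" using insert(4) unfolding J'_def by simp
    have cJ': "card I < card J'" using insert(5) cI j0(1) insert(4) unfolding J'_def by (simp add: card_Diff_singleton)
    define g where "g j i = f j i - (f j i0 / f j0 i0) * f j0 i" for j i
    obtain c' where c': "\<exists>j\<in>J'. c' j \<noteq> 0" "\<forall>i\<in>I. (\<Sum>j\<in>J'. c' j * g j i) = 0"
      using insert.IH[OF fJ' cJ', of g] by blast
    define S0 where "S0 = (\<Sum>j\<in>J'. c' j * f j i0)"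
    define c where "c j = (if j = j0 then - S0 / f j0 i0 else c' j)" for j
    have spl: "(\<Sum>j\<in>J. c j * f j i) = c j0 * f j0 i + (\<Sum>j\<in>J'. c' j * f j i)" for i
    proof -
      have "(\<Sum>j\<in>J. c j * f j i) = c j0 * f j0 i + (\<Sum>j\<in>J'. c j * f j i)"
        unfolding J'_def using insert(4) j0(1) by (rule sum.remove)
      also have "(\<Sum>j\<in>J'. c j * f j i) = (\<Sum>j\<in>J'. c' j * f j i)"
        unfolding c_def J'_def by (intro sum.cong) auto
      finally show ?thesis .
    qed
    have nz: "\<exists>j\<in>J. c j \<noteq> 0" using c'(1) unfolding c_def J'_def by auto
    have z0: "(\<Sum>j\<in>J. c j * f j i0) = 0"
    proof -
      have "(\<Sum>j\<in>J. c j * f j i0) = c j0 * f j0 i0 + S0" using spl[of i0] unfolding S0_def .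
      also have "\<dots> = 0" unfolding c_def using j0(2) by simp
      finally show ?thesis .
    qed
    have zI: "(\<Sum>j\<in>J. c j * f j i) = 0" if i: "i \<in> I" for i
    proof -
      have "(\<Sum>j\<in>J'. c' j * f j i) = (\<Sum>j\<in>J'. c' j * g j i + (f j0 i / f j0 i0) * (c' j * f j i0))"
        unfolding g_def by (intro sum.cong refl) (simp add: algebra_simps)
      also have "\<dots> = (f j0 i / f j0 i0) * S0"
        using c'(2) i unfolding S0_def by (simp add: sum.distrib sum_distrib_left)
      finally have A: "(\<Sum>j\<in>J'. c' j * f j i) = (f j0 i / f j0 i0) * S0" .
      have "(\<Sum>j\<in>J. c j * f j i) = c j0 * f j0 i + (f j0 i / f j0 i0) * S0" using spl[of i] A by simp
      also have "\<dots> = 0" unfolding c_def using j0(2) by (simp add: field_simps)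
      finally show ?thesis .
    qed
    show ?thesis using nz z0 zI by blast
  qed
qed

lemma caratheodory: fixes x :: "'j \<Rightarrow> 'i \<Rightarrow> real"
  assumes "finite I" "finite J" "\<forall>j\<in>J. 0 \<le> p j" "(\<Sum>j\<in>J. p j) = 1"
  shows "\<exists>J' p'. J' \<subseteq> J \<and> card J' \<le> card I + 1 \<and> (\<forall>j\<in>J'. 0 \<le> p' j) \<and> (\<Sum>j\<in>J'. p' j) = 1
     \<and> (\<forall>i\<in>I. (\<Sum>j\<in>J'. p' j * x j i) = (\<Sum>j\<in>J. p j * x j i))"
  using assms(2-4)
proof (induction "card J" arbitrary: J p rule: less_induct)
  case less
  show ?case
  proof (cases "card J \<le> card I + 1")
    case True
    thus ?thesis using less(3,4) by (intro exI[of _ J] exI[of _ p]) auto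
  next
    case False
    define I' where "I' = insert None (Some ` I)"
    define f where "f j io = (case io of None \<Rightarrow> 1 | Some i \<Rightarrow> x j i)" for j io
    have fI': "finite I'" unfolding I'_def using assms(1) by simp
    have cI': "card I' = card I + 1" unfolding I'_def using assms(1) by (simp add: card_image)
    obtain c where c: "\<exists>j\<in>J. c j \<noteq> 0" "\<forall>io\<in>I'. (\<Sum>j\<in>J. c j * f j io) = 0"
      using lindep[OF fI' less(2), of f] cI' False by auto
    have c1: "(\<Sum>j\<in>J. c j) = 0" using c(2) unfolding I'_def f_def by auto
    have cx: "\<forall>i\<in>I. (\<Sum>j\<in>J. c j * x j i) = 0" using c(2) unfolding I'_def f_def by auto
    have pos: "\<exists>j\<in>J. 0 < c j"
    proof (rule ccontr)
      assume "\<not> ?thesis"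
      hence nn: "\<forall>j\<in>J. 0 \<le> - c j" by (auto simp: not_less)
      have s0: "(\<Sum>j\<in>J. - c j) = 0" using c1 by (simp add: sum_negf)
      have "\<forall>j\<in>J. - c j = 0" using sum_nonneg_eq_0_iff[OF less(2), of "\<lambda>j. - c j"] nn s0 by simp
      thus False using c(1) by simp
    qed
    define Jp where "Jp = {j\<in>J. 0 < c j}"
    have fJp: "finite Jp" "Jp \<noteq> {}" unfolding Jp_def using less(2) pos by auto
    define t where "t = Min ((\<lambda>j. p j / c j) ` Jp)"
    have "t \<in> (\<lambda>j. p j / c j) ` Jp" unfolding t_def using fJp by (intro Min_in) auto
    then obtain j1 where j1: "j1 \<in> Jp" "t = p j1 / c j1" by blast
    have tle: "t \<le> p j / c j" if "j \<in> Jp" for j unfolding t_def using fJp that by (intro Min_le) auto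
    have "0 \<le> p j1" "0 < c j1" using j1(1) less(3) unfolding Jp_def by auto
    hence t0: "0 \<le> t" unfolding j1(2) by simp
    define p' where "p' j = p j - t * c j" for j
    have p'0: "\<forall>j\<in>J. 0 \<le> p' j"
    proof
      fix j assume j: "j \<in> J"
      show "0 \<le> p' j"
      proof (cases "0 < c j")
        case True
        hence "t \<le> p j / c j" using tle j unfolding Jp_def by auto
        hence "t * c j \<le> p j" using True by (simp add: pos_le_divide_eq)
        thus ?thesis unfolding p'_def by simp
      next
        case False
        hence "t * c j \<le> 0" using t0 by (simp add: mult_nonneg_nonpos)
        thus ?thesis unfolding p'_def using less(3) j by auto
      qed
    qed
    have p'j1: "p' j1 = 0" unfolding p'_def j1(2) using j1(1) unfolding Jp_def by auto
    have j1J: "j1 \<in> J" using j1(1) unfolding Jp_def by auto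
    have sp': "(\<Sum>j\<in>J. p' j) = 1" unfolding p'_def using less(4) c1
      by (simp add: sum_subtractf sum_distrib_left[symmetric])
    have xp': "\<forall>i\<in>I. (\<Sum>j\<in>J. p' j * x j i) = (\<Sum>j\<in>J. p j * x j i)"
    proof
      fix i assume "i \<in> I"
      hence "(\<Sum>j\<in>J. t * (c j * x j i)) = 0" using cx by (simp add: sum_distrib_left[symmetric])
      thus "(\<Sum>j\<in>J. p' j * x j i) = (\<Sum>j\<in>J. p j * x j i)"
        unfolding p'_def by (simp add: algebra_simps sum_subtractf)
    qed
    define J2 where "J2 = J - {j1}"
    have fJ2: "finite J2" unfolding J2_def using less(2) by simp
    have cJ2: "card J2 < card J" unfolding J2_def by (rule card_Diff1_less[OF less(2) j1J])
    have rem: "(\<Sum>j\<in>J. g j) = g j1 + (\<Sum>j\<in>J2. g j)" for g :: "'j \<Rightarrow> real"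
      unfolding J2_def using less(2) j1J by (rule sum.remove)
    have s2: "(\<Sum>j\<in>J2. p' j) = 1" using sp' rem[of p'] p'j1 by simp
    have x2: "\<forall>i\<in>I. (\<Sum>j\<in>J2. p' j * x j i) = (\<Sum>j\<in>J. p j * x j i)"
      using xp' rem p'j1 by simp
    have p2: "\<forall>j\<in>J2. 0 \<le> p' j" using p'0 unfolding J2_def by auto
    obtain J' p'' where r: "J' \<subseteq> J2" "card J' \<le> card I + 1" "\<forall>j\<in>J'. 0 \<le> p'' j" "(\<Sum>j\<in>J'. p'' j) = 1"
      "\<forall>i\<in>I. (\<Sum>j\<in>J'. p'' j * x j i) = (\<Sum>j\<in>J2. p' j * x j i)"
      using less(1)[OF cJ2 fJ2 p2 s2] by blast
    show ?thesis using r x2 unfolding J2_def by (intro exI[of _ J'] exI[of _ p'']) auto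
  qed
qed




lemma sum_pad: fixes g :: "nat \<Rightarrow> 'a::comm_monoid_add"
  assumes "n \<le> M" "\<forall>j. n \<le> j \<and> j < M \<longrightarrow> g j = 0"
  shows "(\<Sum>j<M. g j) = (\<Sum>j<n. g j)"
proof -
  have "(\<Sum>j<M. g j) = (\<Sum>j\<in>{..<M} - {..<n}. g j) + (\<Sum>j<n. g j)"
    using assms(1) by (intro sum.subset_diff) auto
  also have "(\<Sum>j\<in>{..<M} - {..<n}. g j) = 0" using assms(2) by (intro sum.neutral) auto
  finally show ?thesis by simp
qed

lemma sep_M: fixes dims defines "D \<equiv> prod_list dims"
  assumes s: "separable dims \<sigma>"
  shows "\<exists>p \<tau>. (\<forall>j<2*D*D+1. 0 \<le> p j \<and> product_state dims (\<tau> j)) \<and> (\<Sum>j<2*D*D+1. p j) = 1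
    \<and> (\<forall>a<D. \<forall>b<D. \<sigma> $$ (a,b) = (\<Sum>j<2*D*D+1. complex_of_real (p j) * \<tau> j $$ (a,b)))"
proof -
  let ?M = "2*D*D+1"
  obtain m :: nat and p t where pt: "\<forall>j<m. 0 \<le> p j \<and> product_state dims (t j)" and s1: "(\<Sum>j<m. p j) = 1"
    and e: "\<forall>a < D. \<forall>b < D. \<sigma> $$ (a,b) = (\<Sum>j<m. complex_of_real (p j) * t j $$ (a,b))"
    using s unfolding separable_def D_def by blast
  define I where "I = {..<D}\<times>{..<D}\<times>(UNIV::bool set)"
  define x where "x j i = (case i of (a,b,r) \<Rightarrow> if r then Re (t j $$ (a,b)) else Im (t j $$ (a,b)))" for j i
  have fI: "finite I" unfolding I_def by simp
  have cI: "card I = 2*D*D" unfolding I_def by (simp add: card_cartesian_product)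
  obtain J' p' where J': "J' \<subseteq> {..<m}" "card J' \<le> card I + 1" "\<forall>j\<in>J'. 0 \<le> p' j" "(\<Sum>j\<in>J'. p' j) = 1"
    "\<forall>i\<in>I. (\<Sum>j\<in>J'. p' j * x j i) = (\<Sum>j\<in>{..<m}. p j * x j i)"
  proof -
    have "\<forall>j\<in>{..<m}. 0 \<le> p j" using pt by auto
    from caratheodory[OF fI finite_lessThan[of m] this s1, where x=x] show ?thesis using that by blast
  qed
  have fJ': "finite J'" using J'(1) finite_subset by blast
  have eq: "(\<Sum>j\<in>J'. complex_of_real (p' j) * t j $$ (a,b)) = \<sigma> $$ (a,b)" if ab: "a < D" "b < D" for a b
  proof -
    have r: "(\<Sum>j\<in>J'. p' j * x j (a,b,True)) = (\<Sum>j\<in>{..<m}. p j * x j (a,b,True))"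
      and i: "(\<Sum>j\<in>J'. p' j * x j (a,b,False)) = (\<Sum>j\<in>{..<m}. p j * x j (a,b,False))"
      using J'(5) ab unfolding I_def by auto
    show ?thesis unfolding e[rule_format, OF ab]
      using r i unfolding x_def by (intro complex_eqI) (simp_all add: Re_sum Im_sum)
  qed
  have ne: "J' \<noteq> {}" using J'(4) by auto
  obtain h where h: "bij_betw h {0..<card J'} J'" using ex_bij_betw_nat_finite[OF fJ'] by blast
  define n' where "n' = card J'"
  have n'M: "n' \<le> ?M" using J'(2) cI unfolding n'_def by simp
  have n'0: "0 < n'" using ne fJ' unfolding n'_def by auto
  have hJ: "h j \<in> J'" if "j < n'" for j using h that unfolding n'_def bij_betw_def by auto
  define q where "q j = (if j < n' then p' (h j) else 0)" for j
  define \<tau> where "\<tau> j = (if j < n' then t (h j) else t (h 0))" for j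
  have reidx: "(\<Sum>j<n'. g (h j)) = (\<Sum>j\<in>J'. g j)" for g :: "nat \<Rightarrow> 'b::comm_monoid_add"
    using sum.reindex_bij_betw[OF h, of g] unfolding n'_def by (simp add: atLeast0LessThan)
  have c1: "\<forall>j<?M. 0 \<le> q j \<and> product_state dims (\<tau> j)"
  proof (intro allI impI conjI)
    fix j assume "j < ?M"
    show "0 \<le> q j" unfolding q_def using J'(3) hJ by auto
    have "h j \<in> J'" if "j < n'" using hJ that by blast
    moreover have "h 0 \<in> J'" using hJ n'0 by blast
    ultimately show "product_state dims (\<tau> j)" unfolding \<tau>_def using J'(1) pt by auto
  qed
  have c2: "(\<Sum>j<?M. q j) = 1"
  proof -
    have "(\<Sum>j<?M. q j) = (\<Sum>j<n'. q j)" using n'M by (intro sum_pad) (auto simp: q_def)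
    also have "\<dots> = (\<Sum>j<n'. p' (h j))" unfolding q_def by simp
    also have "\<dots> = 1" using reidx[of p'] J'(4) by simp
    finally show ?thesis .
  qed
  have c3: "\<sigma> $$ (a,b) = (\<Sum>j<?M. complex_of_real (q j) * \<tau> j $$ (a,b))" if ab: "a < D" "b < D" for a b
  proof -
    have "(\<Sum>j<?M. complex_of_real (q j) * \<tau> j $$ (a,b)) = (\<Sum>j<n'. complex_of_real (q j) * \<tau> j $$ (a,b))"
      using n'M by (intro sum_pad) (auto simp: q_def)
    also have "\<dots> = (\<Sum>j<n'. complex_of_real (p' (h j)) * t (h j) $$ (a,b))" unfolding q_def \<tau>_def by simp
    also have "\<dots> = \<sigma> $$ (a,b)" using reidx[of "\<lambda>j. complex_of_real (p' j) * t j $$ (a,b)"] eq[OF ab] by simp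
    finally show ?thesis by simp
  qed
  show ?thesis using c1 c2 c3 by blast
qed




lemma quad_tendsto: assumes "\<forall>a<d. \<forall>b<d. (\<lambda>k. Z k $$ (a,b)) \<longlonglongrightarrow> L $$ (a,b)" "v \<in> carrier_vec d"
  shows "(\<lambda>k. quad (Z k) v) \<longlonglongrightarrow> quad L v"
  unfolding quad_def using assms by (auto intro!: tendsto_sum tendsto_mult tendsto_const)

lemma density_closed: assumes Z: "\<forall>k. density_op d (Z k)" and L: "L \<in> carrier_mat d d"
  and c: "\<forall>a<d. \<forall>b<d. (\<lambda>k. Z k $$ (a,b)) \<longlonglongrightarrow> L $$ (a,b)"
  shows "density_op d L"
proof -
  have Zc: "Z k \<in> carrier_mat d d" for k using Z unfolding density_op_def by auto
  have Zh: "Z k $$ (j,i) = cnj (Z k $$ (i,j))" if "i < d" "j < d" for k i j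
  proof -
    have "hermitian_mat (Z k)" using Z unfolding density_op_def by blast
    thus ?thesis using that unfolding hermitian_iff[OF Zc[of k]] by blast
  qed
  have h: "hermitian_mat L" unfolding hermitian_iff[OF L]
  proof (intro allI impI)
    fix i j assume ij: "i < d" "j < d"
    have 1: "(\<lambda>k. Z k $$ (j,i)) \<longlonglongrightarrow> L $$ (j,i)" using c ij by blast
    have "(\<lambda>k. cnj (Z k $$ (i,j))) \<longlonglongrightarrow> cnj (L $$ (i,j))" using c ij by (intro tendsto_cnj) blast
    hence 2: "(\<lambda>k. Z k $$ (j,i)) \<longlonglongrightarrow> cnj (L $$ (i,j))" using Zh[OF ij] by simp
    show "L $$ (j,i) = cnj (L $$ (i,j))" using LIMSEQ_unique[OF 1 2] .
  qed
  have p: "0 \<le> Re ((L *\<^sub>v v) \<bullet>c v)" if v: "v \<in> carrier_vec d" for v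
  proof -
    have "(\<lambda>k. Re (quad (Z k) v)) \<longlonglongrightarrow> Re (quad L v)" by (intro tendsto_Re quad_tendsto[OF c v])
    moreover have "0 \<le> Re (quad (Z k) v)" for k
      using Z v quad_mulv[OF Zc[of k] v] unfolding density_op_def by metis
    ultimately have "0 \<le> Re (quad L v)" by (intro LIMSEQ_le_const) auto
    thus ?thesis using quad_mulv[OF L v] by simp
  qed
  have "(\<lambda>k. mtrace (Z k)) \<longlonglongrightarrow> mtrace L"
  proof -
    have "(\<lambda>k. \<Sum>i<d. Z k $$ (i,i)) \<longlonglongrightarrow> (\<Sum>i<d. L $$ (i,i))" using c by (intro tendsto_sum) auto
    moreover have "dim_row (Z k) = d" for k using Zc[of k] by simp
    ultimately show ?thesis unfolding mtrace_def using L by simp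
  qed
  moreover have "mtrace (Z k) = 1" for k using Z unfolding density_op_def by auto
  ultimately have "(\<lambda>k. 1) \<longlonglongrightarrow> mtrace L" by simp
  hence t: "mtrace L = 1" by (simp add: LIMSEQ_const_iff)
  show ?thesis unfolding density_op_def using L h p t by blast
qed

lemma lcar_length: "lcar dims As \<Longrightarrow> length As = length dims" unfolding lcar_def by simp

lemma kron_tendsto: assumes "\<forall>k. lcar dims (Z k)" "lcar dims Ls"
  "\<forall>l<length dims. \<forall>a<dims!l. \<forall>b<dims!l. (\<lambda>k. Z k ! l $$ (a,b)) \<longlonglongrightarrow> Ls ! l $$ (a,b)"
  shows "\<forall>a<prod_list dims. \<forall>b<prod_list dims. (\<lambda>k. kron_list (Z k) $$ (a,b)) \<longlonglongrightarrow> kron_list Ls $$ (a,b)"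
  using assms
proof (induction dims arbitrary: Z Ls)
  case Nil
  have "Z k = []" for k using Nil(1) unfolding lcar_def by auto
  moreover have "Ls = []" using Nil(2) unfolding lcar_def by auto
  ultimately show ?case by simp
next
  case (Cons d ds)
  define H where "H k = hd (Z k)" for k
  define T where "T k = tl (Z k)" for k
  have ZHT: "Z k = H k # T k" for k using lcar_length[OF Cons(2)[rule_format, of k]] unfolding H_def T_def
    by (cases "Z k") auto
  obtain L0 Ls' where Ls: "Ls = L0 # Ls'" using lcar_length[OF Cons(3)] by (cases Ls) auto
  have Hc: "H k \<in> carrier_mat d d" and Tl: "lcar ds (T k)" for k using Cons(2) ZHT lcar_Cons by metis+
  have L0c: "L0 \<in> carrier_mat d d" and Ll: "lcar ds Ls'" using Cons(3) Ls lcar_Cons by auto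
  have cT: "\<forall>l<length ds. \<forall>a<ds!l. \<forall>b<ds!l. (\<lambda>k. T k ! l $$ (a,b)) \<longlonglongrightarrow> Ls' ! l $$ (a,b)"
  proof (intro allI impI)
    fix l a b assume "l < length ds" "a < ds!l" "b < ds!l"
    thus "(\<lambda>k. T k ! l $$ (a,b)) \<longlonglongrightarrow> Ls' ! l $$ (a,b)"
      using Cons(4)[rule_format, of "Suc l" a b] ZHT Ls by simp
  qed
  have cH: "\<forall>a<d. \<forall>b<d. (\<lambda>k. H k $$ (a,b)) \<longlonglongrightarrow> L0 $$ (a,b)"
    using Cons(4)[rule_format, of 0] ZHT Ls by simp
  have IH: "\<forall>a<prod_list ds. \<forall>b<prod_list ds. (\<lambda>k. kron_list (T k) $$ (a,b)) \<longlonglongrightarrow> kron_list Ls' $$ (a,b)"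
    by (rule Cons.IH[OF _ Ll cT]) (use Tl in blast)
  show ?case
  proof (intro allI impI)
    fix a b assume ab: "a < prod_list (d # ds)" "b < prod_list (d # ds)"
    let ?D' = "prod_list ds"
    have ab': "a < d * ?D'" "b < d * ?D'" using ab by auto
    have m0: "0 < ?D'" using ab' by (metis mult_0_right not_less_zero neq0_conv)
    have dv: "a div ?D' < d" "b div ?D' < d" using ab' by (simp_all add: less_mult_imp_div_less)
    have md: "a mod ?D' < ?D'" "b mod ?D' < ?D'" using m0 by auto
    have KT: "kron_list (T k) \<in> carrier_mat ?D' ?D'" for k using lcar_kron[OF Tl] .
    have KL: "kron_list Ls' \<in> carrier_mat ?D' ?D'" using lcar_kron[OF Ll] .
    have e1: "kron_list (Z k) $$ (a,b) = H k $$ (a div ?D', b div ?D') * kron_list (T k) $$ (a mod ?D', b mod ?D')" for k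
      unfolding ZHT kron_list.simps using ab' Hc[of k] KT[of k] by (simp add: kron_index)
    have e2: "kron_list Ls $$ (a,b) = L0 $$ (a div ?D', b div ?D') * kron_list Ls' $$ (a mod ?D', b mod ?D')"
      unfolding Ls kron_list.simps using ab' L0c KL by (simp add: kron_index)
    show "(\<lambda>k. kron_list (Z k) $$ (a,b)) \<longlonglongrightarrow> kron_list Ls $$ (a,b)"
      unfolding e1 e2 using cH IH dv md by (intro tendsto_mult) auto
  qed
qed

lemma kron_list_bound: "lcar dims As \<Longrightarrow> (\<forall>l<length dims. \<forall>a<dims!l. \<forall>b<dims!l. cmod (As ! l $$ (a,b)) \<le> 1)
  \<Longrightarrow> a < prod_list dims \<Longrightarrow> b < prod_list dims \<Longrightarrow> cmod (kron_list As $$ (a,b)) \<le> 1"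
proof (induction As arbitrary: dims a b)
  case Nil
  then have "dims = []" unfolding lcar_def by auto
  thus ?case using Nil by simp
next
  case (Cons A As)
  obtain d ds where dims: "dims = d # ds" using lcar_length[OF Cons(2)] by (cases dims) auto
  have Ac: "A \<in> carrier_mat d d" and Al: "lcar ds As" using Cons(2) dims lcar_Cons by auto
  let ?D' = "prod_list ds"
  have ab': "a < d * ?D'" "b < d * ?D'" using Cons(4,5) dims by auto
  have m0: "0 < ?D'" using ab' by (metis mult_0_right not_less_zero neq0_conv)
  have dv: "a div ?D' < d" "b div ?D' < d" using ab' by (simp_all add: less_mult_imp_div_less)
  have md: "a mod ?D' < ?D'" "b mod ?D' < ?D'" using m0 by auto
  have bA: "cmod (A $$ (a div ?D', b div ?D')) \<le> 1" using Cons(3)[rule_format, of 0] dims dv by simp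
  have bT: "\<forall>l<length ds. \<forall>a<ds!l. \<forall>b<ds!l. cmod (As ! l $$ (a,b)) \<le> 1"
  proof (intro allI impI)
    fix l a b assume "l < length ds" "a < ds!l" "b < ds!l"
    thus "cmod (As ! l $$ (a,b)) \<le> 1" using Cons(3)[rule_format, of "Suc l" a b] dims by simp
  qed
  have bK: "cmod (kron_list As $$ (a mod ?D', b mod ?D')) \<le> 1" using Cons.IH[OF Al bT md] .
  have "kron_list (A # As) $$ (a,b) = A $$ (a div ?D', b div ?D') * kron_list As $$ (a mod ?D', b mod ?D')"
    using ab' Ac lcar_kron[OF Al] by (simp add: kron_index)
  thus ?case using bA bK by (simp add: norm_mult mult_le_one)
qed

lemma product_entry: assumes "product_state dims \<tau>" "a < prod_list dims" "b < prod_list dims"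
  shows "cmod (\<tau> $$ (a,b)) \<le> 1"
proof -
  obtain \<sigma>s where l: "length \<sigma>s = length dims" and d: "\<forall>k<length dims. density_op (dims!k) (\<sigma>s!k)"
    and t: "\<tau> = kron_list \<sigma>s" using assms(1) unfolding product_state_def by auto
  have lc: "lcar dims \<sigma>s" using l d unfolding lcar_def density_op_def by auto
  show ?thesis unfolding t using kron_list_bound[OF lc _ assms(2,3)] d density_entry by blast
qed

lemma sep_entry: assumes "separable dims \<tau>" "a < prod_list dims" "b < prod_list dims"
  shows "cmod (\<tau> $$ (a,b)) \<le> 1"
proof -
  obtain m :: nat and p t where pt: "\<forall>j<m. 0 \<le> p j \<and> product_state dims (t j)" and s1: "(\<Sum>j<m. p j) = 1"
    and e: "\<forall>a < prod_list dims. \<forall>b < prod_list dims. \<tau> $$ (a,b) = (\<Sum>j<m. complex_of_real (p j) * t j $$ (a,b))"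
    using assms(1) unfolding separable_def by blast
  have "cmod (\<tau> $$ (a,b)) \<le> (\<Sum>j<m. cmod (complex_of_real (p j) * t j $$ (a,b)))"
    unfolding e[rule_format, OF assms(2,3)] by (rule norm_sum)
  also have "\<dots> \<le> (\<Sum>j<m. p j)"
  proof (rule sum_mono)
    fix j assume "j \<in> {..<m}"
    hence "0 \<le> p j" "cmod (t j $$ (a,b)) \<le> 1" using pt product_entry assms(2,3) by auto
    thus "cmod (complex_of_real (p j) * t j $$ (a,b)) \<le> p j" by (simp add: norm_mult mult_left_le)
  qed
  finally show ?thesis using s1 by simp
qed

lemma elem_le_prod: "x \<in> set xs \<Longrightarrow> 0 < prod_list xs \<Longrightarrow> x \<le> (prod_list xs :: nat)"
proof (induction xs)
  case Nil thus ?case by simp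
next
  case (Cons y ys)
  show ?case
  proof (cases "x = y")
    case True thus ?thesis using Cons(3) by simp
  next
    case False
    have pos: "0 < y" "0 < prod_list ys" using Cons(3) by auto
    hence "x \<le> prod_list ys" using Cons False by simp
    moreover have "prod_list ys \<le> y * prod_list ys" using pos by simp
    ultimately have "x \<le> y * prod_list ys" by (rule le_trans)
    thus ?thesis by simp
  qed
qed




lemma sep_pos: "separable dims \<tau> \<Longrightarrow> 0 < prod_list dims"
  using separable_trace[of dims \<tau>] unfolding separable_def mtrace_def by (cases "prod_list dims") auto

lemma sep_closed: fixes dims defines "D \<equiv> prod_list dims"
  assumes X: "\<forall>k. separable dims (X k)" and L: "L \<in> carrier_mat D D"
  and c: "\<forall>a<D. \<forall>b<D. (\<lambda>k. X k $$ (a,b)) \<longlonglongrightarrow> L $$ (a,b)"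
  shows "separable dims L"
proof -
  define M where "M = 2*D*D+1"
  define n where "n = length dims"
  have D0: "0 < D" using sep_pos X unfolding D_def by blast
  have "\<forall>k. \<exists>pt. (\<forall>j<M. 0 \<le> fst pt j \<and> product_state dims (snd pt j)) \<and> (\<Sum>j<M. fst pt j) = 1
    \<and> (\<forall>a<D. \<forall>b<D. X k $$ (a,b) = (\<Sum>j<M. complex_of_real (fst pt j) * snd pt j $$ (a,b)))"
  proof
    fix k
    from sep_M[OF X[rule_format, of k]] obtain p \<tau> where
      "(\<forall>j<M. 0 \<le> p j \<and> product_state dims (\<tau> j)) \<and> (\<Sum>j<M. p j) = 1
       \<and> (\<forall>a<D. \<forall>b<D. X k $$ (a,b) = (\<Sum>j<M. complex_of_real (p j) * \<tau> j $$ (a,b)))"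
      unfolding M_def D_def by blast
    thus "\<exists>pt. (\<forall>j<M. 0 \<le> fst pt j \<and> product_state dims (snd pt j)) \<and> (\<Sum>j<M. fst pt j) = 1
    \<and> (\<forall>a<D. \<forall>b<D. X k $$ (a,b) = (\<Sum>j<M. complex_of_real (fst pt j) * snd pt j $$ (a,b)))"
      by (intro exI[of _ "(p, \<tau>)"]) simp
  qed
  from choice[OF this] obtain PT where PT: "\<forall>k. (\<forall>j<M. 0 \<le> fst (PT k) j \<and> product_state dims (snd (PT k) j)) \<and> (\<Sum>j<M. fst (PT k) j) = 1
    \<and> (\<forall>a<D. \<forall>b<D. X k $$ (a,b) = (\<Sum>j<M. complex_of_real (fst (PT k) j) * snd (PT k) j $$ (a,b)))" by blast
  define P where "P k = fst (PT k)" for k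
  define T where "T k = snd (PT k)" for k
  have P0: "0 \<le> P k j" and Tp: "product_state dims (T k j)" if "j < M" for k j using PT that unfolding P_def T_def by auto
  have P1: "(\<Sum>j<M. P k j) = 1" for k using PT unfolding P_def by auto
  have Xe: "X k $$ (a,b) = (\<Sum>j<M. complex_of_real (P k j) * T k j $$ (a,b))" if "a < D" "b < D" for k a b
    using PT that unfolding P_def T_def by auto
  have "\<forall>kj. \<exists>\<rho>s. snd kj < M \<longrightarrow> (length \<rho>s = n \<and> (\<forall>l<n. density_op (dims!l) (\<rho>s!l)) \<and> T (fst kj) (snd kj) = kron_list \<rho>s)"
    using Tp unfolding product_state_def n_def by blast
  from choice[OF this] obtain R' where R': "\<forall>kj. snd kj < M \<longrightarrow> (length (R' kj) = n \<and> (\<forall>l<n. density_op (dims!l) (R' kj ! l)) \<and> T (fst kj) (snd kj) = kron_list (R' kj))" by blast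
  define R where "R k j = R' (k,j)" for k j
  have Rl: "length (R k j) = n" and Rd: "\<And>l. l < n \<Longrightarrow> density_op (dims!l) (R k j ! l)" and TR: "T k j = kron_list (R k j)"
    if "j < M" for k j using R' that unfolding R_def by auto
  have dimsD: "dims ! l \<le> D" if "l < n" for l
    using elem_le_prod[of "dims!l" dims] that D0 unfolding n_def D_def by simp
  define S where "S = {..<M} \<times> {..<Suc n} \<times> {..<D} \<times> {..<D}"
  define F where "F k i = (case i of (j,l,a,b) \<Rightarrow> if l = n then complex_of_real (P k j)
     else if a < dims!l \<and> b < dims!l then R k j ! l $$ (a,b) else 0)" for k i
  have Pb: "P k j \<le> 1" if "j < M" for k j
  proof -
    have "P k j \<le> (\<Sum>j<M. P k j)" using that P0 by (intro member_le_sum) auto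
    thus ?thesis using P1 by simp
  qed
  have bnd: "\<forall>k. \<forall>i\<in>S. cmod (F k i) \<le> 1"
  proof (intro allI ballI)
    fix k i assume "i \<in> S"
    then obtain j l a b where i: "i = (j,l,a,b)" "j < M" "l < Suc n" by (auto simp: S_def)
    show "cmod (F k i) \<le> 1"
    proof (cases "l = n")
      case True thus ?thesis using i P0 Pb by (simp add: F_def)
    next
      case False
      hence "l < n" using i by simp
      thus ?thesis using i False density_entry[OF Rd[OF i(2)]] by (simp add: F_def)
    qed
  qed
  have fS: "finite S" unfolding S_def by simp
  obtain r where r: "strict_mono r" and cv: "\<forall>i\<in>S. \<exists>l. (\<lambda>k. F (r k) i) \<longlonglongrightarrow> l"
    using subseq_conv[OF fS bnd] by blast
  from bchoice[OF cv] obtain lf where lf: "\<forall>i\<in>S. (\<lambda>k. F (r k) i) \<longlonglongrightarrow> lf i" by blast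
  define pl where "pl j = Re (lf (j,n,0,0))" for j
  define \<rho>l where "\<rho>l j l = mat (dims!l) (dims!l) (\<lambda>(a,b). lf (j,l,a,b))" for j l
  define Ls where "Ls j = map (\<rho>l j) [0..<n]" for j
  have Pc: "(\<lambda>k. P (r k) j) \<longlonglongrightarrow> pl j" if j: "j < M" for j
  proof -
    have "(j,n,0,0) \<in> S" unfolding S_def using j D0 by auto
    hence "(\<lambda>k. F (r k) (j,n,0,0)) \<longlonglongrightarrow> lf (j,n,0,0)" using lf by blast
    hence "(\<lambda>k. Re (F (r k) (j,n,0,0))) \<longlonglongrightarrow> pl j" unfolding pl_def by (rule tendsto_Re)
    thus ?thesis unfolding F_def by simp
  qed
  have Rc: "(\<lambda>k. R (r k) j ! l $$ (a,b)) \<longlonglongrightarrow> \<rho>l j l $$ (a,b)"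
    if j: "j < M" and l: "l < n" and ab: "a < dims!l" "b < dims!l" for j l a b
  proof -
    have "(j,l,a,b) \<in> S" unfolding S_def using j l ab dimsD[OF l] by auto
    hence "(\<lambda>k. F (r k) (j,l,a,b)) \<longlonglongrightarrow> lf (j,l,a,b)" using lf by blast
    thus ?thesis unfolding F_def \<rho>l_def using l ab by simp
  qed
  have \<rho>d: "density_op (dims!l) (\<rho>l j l)" if j: "j < M" and l: "l < n" for j l
    by (rule density_closed[of _ "\<lambda>k. R (r k) j ! l"]) (use Rd[OF j] l Rc[OF j l] in \<open>auto simp: \<rho>l_def\<close>)
  have Lsl: "length (Ls j) = n" for j unfolding Ls_def by simp
  have Lsn: "Ls j ! l = \<rho>l j l" if "l < n" for j l unfolding Ls_def using that by simp
  have lcL: "lcar dims (Ls j)" if j: "j < M" for j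
    unfolding lcar_def n_def[symmetric] using Lsl Lsn \<rho>d[OF j] by (auto simp: density_op_def)
  have lcR: "lcar dims (R k j)" if j: "j < M" for k j
    unfolding lcar_def n_def[symmetric] using Rl[OF j] Rd[OF j] by (auto simp: density_op_def)
  have Kc: "\<forall>a<D. \<forall>b<D. (\<lambda>k. kron_list (R (r k) j) $$ (a,b)) \<longlonglongrightarrow> kron_list (Ls j) $$ (a,b)"
    if j: "j < M" for j
    unfolding D_def
    by (rule kron_tendsto) (use lcR[OF j] lcL[OF j] Rc[OF j] Lsn in \<open>auto simp: n_def\<close>)
  have pl0: "0 \<le> pl j" if j: "j < M" for j
    using Pc[OF j] P0[OF j] by (intro LIMSEQ_le_const) auto
  have pl1: "(\<Sum>j<M. pl j) = 1"
  proof -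
    have "(\<lambda>k. \<Sum>j<M. P (r k) j) \<longlonglongrightarrow> (\<Sum>j<M. pl j)" using Pc by (intro tendsto_sum) auto
    thus ?thesis using P1 by (simp add: LIMSEQ_const_iff)
  qed
  have Le: "L $$ (a,b) = (\<Sum>j<M. complex_of_real (pl j) * kron_list (Ls j) $$ (a,b))" if ab: "a < D" "b < D" for a b
  proof -
    have "(\<lambda>k. X (r k) $$ (a,b)) \<longlonglongrightarrow> L $$ (a,b)"
      using LIMSEQ_subseq_LIMSEQ[OF c[rule_format, OF ab] r] by (simp add: o_def)
    moreover have "(\<lambda>k. X (r k) $$ (a,b)) \<longlonglongrightarrow> (\<Sum>j<M. complex_of_real (pl j) * kron_list (Ls j) $$ (a,b))"
    proof -
      have "(\<lambda>k. \<Sum>j<M. complex_of_real (P (r k) j) * kron_list (R (r k) j) $$ (a,b))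
          \<longlonglongrightarrow> (\<Sum>j<M. complex_of_real (pl j) * kron_list (Ls j) $$ (a,b))"
        using Pc Kc ab by (intro tendsto_sum tendsto_mult tendsto_of_real) auto
      moreover have "X (r k) $$ (a,b) = (\<Sum>j<M. complex_of_real (P (r k) j) * kron_list (R (r k) j) $$ (a,b))" for k
        unfolding Xe[OF ab] using TR by (intro sum.cong refl) auto
      ultimately show ?thesis by simp
    qed
    ultimately show ?thesis using LIMSEQ_unique by blast
  qed
  have ps: "product_state dims (kron_list (Ls j))" if j: "j < M" for j
    unfolding product_state_def using Lsl Lsn \<rho>d[OF j] unfolding n_def by (intro exI[of _ "Ls j"]) auto
  show ?thesis unfolding separable_def D_def[symmetric]
    by (rule conjI[OF L], rule exI[of _ M], rule exI[of _ pl], rule exI[of _ "\<lambda>j. kron_list (Ls j)"])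
       (use pl0 ps pl1 Le in auto)
qed




lemma sum_concat_nat: "(\<Sum>j<m1+(m2::nat). g j) = (\<Sum>j<m1. g j) + (\<Sum>j<m2. g (m1 + j))"
  by (induction m2) (simp_all add: add.assoc)

lemma sep_convex: fixes dims defines "D \<equiv> prod_list dims"
  assumes A: "separable dims A" and B: "separable dims B" and t: "0 \<le> t" "t \<le> 1"
  and Q: "Q \<in> carrier_mat D D" and Qe: "\<forall>a<D. \<forall>b<D. Q $$ (a,b) = complex_of_real (1 - t) * A $$ (a,b) + complex_of_real t * B $$ (a,b)"
  shows "separable dims Q"
proof -
  obtain m1 :: nat and p1 t1 where pt1: "\<forall>j<m1. 0 \<le> p1 j \<and> product_state dims (t1 j)" and s1: "(\<Sum>j<m1. p1 j) = 1"
    and e1: "\<forall>a < D. \<forall>b < D. A $$ (a,b) = (\<Sum>j<m1. complex_of_real (p1 j) * t1 j $$ (a,b))"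
    using A unfolding separable_def D_def by blast
  obtain m2 :: nat and p2 t2 where pt2: "\<forall>j<m2. 0 \<le> p2 j \<and> product_state dims (t2 j)" and s2: "(\<Sum>j<m2. p2 j) = 1"
    and e2: "\<forall>a < D. \<forall>b < D. B $$ (a,b) = (\<Sum>j<m2. complex_of_real (p2 j) * t2 j $$ (a,b))"
    using B unfolding separable_def D_def by blast
  define q where "q j = (if j < m1 then (1 - t) * p1 j else t * p2 (j - m1))" for j
  define \<tau> where "\<tau> j = (if j < m1 then t1 j else t2 (j - m1))" for j
  have c1: "\<forall>j<m1+m2. 0 \<le> q j \<and> product_state dims (\<tau> j)"
    using pt1 pt2 t unfolding q_def \<tau>_def by auto
  have c2: "(\<Sum>j<m1+m2. q j) = 1"
    unfolding sum_concat_nat q_def using s1 s2 by (simp add: sum_distrib_left[symmetric])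
  have c3: "Q $$ (a,b) = (\<Sum>j<m1+m2. complex_of_real (q j) * \<tau> j $$ (a,b))" if ab: "a < D" "b < D" for a b
    unfolding sum_concat_nat q_def \<tau>_def Qe[rule_format, OF ab] e1[rule_format, OF ab] e2[rule_format, OF ab]
    by (simp add: sum_distrib_left mult.assoc)
  show ?thesis unfolding separable_def D_def[symmetric]
    by (rule conjI[OF Q], rule exI[of _ "m1+m2"], rule exI[of _ q], rule exI[of _ \<tau>]) (use c1 c2 c3 in auto)
qed

lemma product_herm: assumes "product_state dims \<tau>" "a < prod_list dims" "b < prod_list dims"
  shows "\<tau> $$ (b,a) = cnj (\<tau> $$ (a,b))"
proof -
  obtain \<sigma>s where l: "length \<sigma>s = length dims" and d: "\<forall>k<length dims. density_op (dims!k) (\<sigma>s!k)"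
    and t: "\<tau> = kron_list \<sigma>s" using assms(1) unfolding product_state_def by auto
  have lc: "lcar dims \<sigma>s" using l d unfolding lcar_def density_op_def by auto
  have "map mat_adjoint \<sigma>s = \<sigma>s" using l d unfolding density_op_def hermitian_mat_def by (intro nth_equalityI) auto
  hence "mat_adjoint \<tau> = \<tau>" unfolding t using kron_list_adj[OF lc] by simp
  thus ?thesis using hermitian_iff[OF lcar_kron[OF lc]] assms(2,3) t unfolding hermitian_mat_def by blast
qed

lemma sep_herm: assumes "separable dims \<tau>" "a < prod_list dims" "b < prod_list dims"
  shows "\<tau> $$ (b,a) = cnj (\<tau> $$ (a,b))"
proof -
  obtain m :: nat and p t where pt: "\<forall>j<m. 0 \<le> p j \<and> product_state dims (t j)"
    and e: "\<forall>a < prod_list dims. \<forall>b < prod_list dims. \<tau> $$ (a,b) = (\<Sum>j<m. complex_of_real (p j) * t j $$ (a,b))"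
    using assms(1) unfolding separable_def by blast
  show ?thesis
  proof -
    have "(\<Sum>j<m. complex_of_real (p j) * t j $$ (b,a)) = (\<Sum>j<m. cnj (complex_of_real (p j) * t j $$ (a,b)))"
    proof (rule sum.cong[OF refl])
      fix j assume "j \<in> {..<m}"
      hence "t j $$ (b,a) = cnj (t j $$ (a,b))" using pt product_herm[OF _ assms(2,3)] by blast
      thus "complex_of_real (p j) * t j $$ (b,a) = cnj (complex_of_real (p j) * t j $$ (a,b))" by simp
    qed
    hence "\<tau> $$ (b,a) = (\<Sum>j<m. cnj (complex_of_real (p j) * t j $$ (a,b)))"
      using e[rule_format, OF assms(3,2)] by simp
    also have "\<dots> = cnj (\<tau> $$ (a,b))" using e[rule_format, OF assms(2,3)] by (simp add: cnj_sum)
    finally show ?thesis .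
  qed
qed

lemma product_exists: assumes "0 < prod_list dims"
  shows "product_state dims (kron_list (map (\<lambda>d. outer (unit_vec d 0)) dims))"
proof -
  have "0 < dims ! k" if "k < length dims" for k
    using assms that by (metis gr0I in_set_conv_nth prod_list_zero_iff)
  thus ?thesis unfolding product_state_def
    by (intro exI[of _ "map (\<lambda>d. outer (unit_vec d 0)) dims"]) (auto intro!: unitv_density unitv_unit)
qed

lemma mtrace_smult: assumes "A \<in> carrier_mat n n" "X \<in> carrier_mat n n"
  shows "mtrace ((c \<cdot>\<^sub>m A) * X) = c * mtrace (A * X)"
  unfolding mtrace_mult[OF smult_carrier_mat[OF assms(1)] assms(2)] mtrace_mult[OF assms]
  using assms by (simp add: sum_distrib_left mult.assoc)

lemma herm_ip: assumes W: "W \<in> carrier_mat n n" and X: "X \<in> carrier_mat n n"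
  and h: "\<forall>i<n. \<forall>j<n. W $$ (j,i) = cnj (W $$ (i,j))"
  shows "mtrace (W * X) = (\<Sum>a<n. \<Sum>b<n. cnj (W $$ (a,b)) * X $$ (a,b))"
proof -
  have "mtrace (W * X) = (\<Sum>i<n. \<Sum>j<n. W $$ (i,j) * X $$ (j,i))" by (rule mtrace_mult[OF W X])
  also have "\<dots> = (\<Sum>i<n. \<Sum>j<n. cnj (W $$ (j,i)) * X $$ (j,i))"
  proof (intro sum.cong refl)
    fix i j assume "i \<in> {..<n}" "j \<in> {..<n}"
    hence "W $$ (i,j) = cnj (W $$ (j,i))" using h by blast
    thus "W $$ (i,j) * X $$ (j,i) = cnj (W $$ (j,i)) * X $$ (j,i)" by simp
  qed
  also have "\<dots> = (\<Sum>a<n. \<Sum>b<n. cnj (W $$ (a,b)) * X $$ (a,b))" by (rule sum.swap)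
  finally show ?thesis .
qed

lemma cmod_expand: "(cmod (z - complex_of_real t * y))\<^sup>2 = (cmod z)\<^sup>2 - 2 * t * Re (cnj z * y) + t\<^sup>2 * (cmod y)\<^sup>2"
  unfolding cmod_power2 by (simp add: power2_eq_square algebra_simps)

lemma mtrace_shift: assumes W: "W \<in> carrier_mat n n" and X: "X \<in> carrier_mat n n"
  shows "mtrace ((W - c \<cdot>\<^sub>m 1\<^sub>m n) * X) = mtrace (W * X) - c * mtrace X"
proof -
  have C: "W - c \<cdot>\<^sub>m 1\<^sub>m n \<in> carrier_mat n n" by (rule minus_carrier_mat) simp
  have "mtrace ((W - c \<cdot>\<^sub>m 1\<^sub>m n) * X) = (\<Sum>i<n. \<Sum>j<n. (W $$ (i,j) - (if i = j then c else 0)) * X $$ (j,i))"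
    unfolding mtrace_mult[OF C X] using W by (intro sum.cong refl) auto
  also have "\<dots> = (\<Sum>i<n. (\<Sum>j<n. W $$ (i,j) * X $$ (j,i)) - c * X $$ (i,i))"
  proof (rule sum.cong[OF refl])
    fix i assume i: "i \<in> {..<n}"
    have "(\<Sum>j<n. (W $$ (i,j) - (if i = j then c else 0)) * X $$ (j,i))
        = (\<Sum>j<n. W $$ (i,j) * X $$ (j,i)) - (\<Sum>j<n. (if i = j then c else 0) * X $$ (j,i))"
      by (simp add: algebra_simps sum_subtractf)
    also have "(\<Sum>j<n. (if i = j then c else 0) * X $$ (j,i)) = c * X $$ (i,i)"
      using i by (subst one_point_sum[of i]) auto
    finally show "(\<Sum>j<n. (W $$ (i,j) - (if i = j then c else 0)) * X $$ (j,i)) = (\<Sum>j<n. W $$ (i,j) * X $$ (j,i)) - c * X $$ (i,i)" .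
  qed
  also have "\<dots> = (\<Sum>i<n. \<Sum>j<n. W$$(i,j)*X$$(j,i)) - c * (\<Sum>i<n. X$$(i,i))"
    by (simp add: sum_subtractf sum_distrib_left)
  also have "\<dots> = mtrace (W * X) - c * mtrace X" using mtrace_mult[OF W X] X by (simp add: mtrace_def[of X])
  finally show ?thesis .
qed




definition dist2 :: "nat \<Rightarrow> complex mat \<Rightarrow> complex mat \<Rightarrow> real" where
  "dist2 D A B = (\<Sum>a<D. \<Sum>b<D. (cmod (A $$ (a,b) - B $$ (a,b)))\<^sup>2)"

lemma dist2_nonneg: "0 \<le> dist2 D A B" unfolding dist2_def by (intro sum_nonneg) auto

lemma sum3: fixes A B C :: "nat \<Rightarrow> nat \<Rightarrow> real"
  shows "(\<Sum>a<D. \<Sum>b<D. A a b - 2*t*B a b + t\<^sup>2 * C a b) = (\<Sum>a<D. \<Sum>b<D. A a b) - 2*t*(\<Sum>a<D. \<Sum>b<D. B a b) + t\<^sup>2 * (\<Sum>a<D. \<Sum>b<D. C a b)"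
  by (simp add: sum.distrib sum_subtractf sum_distrib_left)

lemma re_neg: "Re (cnj (- z) * z) = - (cmod z)\<^sup>2"
  unfolding cmod_power2 by (simp add: power2_eq_square)

lemma real_small: fixes ip nY :: real assumes "\<And>t. 0 < t \<Longrightarrow> t \<le> 1 \<Longrightarrow> 2 * ip \<le> t * nY" "0 \<le> nY"
  shows "ip \<le> 0"
proof (rule ccontr)
  assume "\<not> ip \<le> 0"
  hence ip: "0 < ip" by simp
  define t where "t = min 1 (ip / (nY + 1))"
  have t0: "0 < t" "t \<le> 1" unfolding t_def using ip assms(2) by auto
  have "t * nY \<le> (ip / (nY + 1)) * nY" unfolding t_def using assms(2) by (intro mult_right_mono) auto
  also have "\<dots> < ip" using ip assms(2) by (simp add: field_simps)
  finally have "t * nY < ip" .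
  moreover have "2 * ip \<le> t * nY" using assms(1)[OF t0] .
  ultimately show False using ip by simp
qed

lemma separation: fixes dims defines "D \<equiv> prod_list dims"
  assumes r: "density_op D \<sigma>" and ns: "\<not> separable dims \<sigma>"
  shows "\<exists>W. normalized_EW dims W \<and> Re (mtrace (W * \<sigma>)) < 0"
proof -
  have D0: "0 < D" using density_pos[OF r] .
  have sc: "\<sigma> \<in> carrier_mat D D" and shm: "hermitian_mat \<sigma>" and st: "mtrace \<sigma> = 1"
    using r unfolding density_op_def by auto
  have sh: "\<forall>i<D. \<forall>j<D. \<sigma> $$ (j,i) = cnj (\<sigma> $$ (i,j))" using shm unfolding hermitian_iff[OF sc] .
  let ?S = "{\<tau>. separable dims \<tau>}"
  let ?f = "\<lambda>\<tau>. dist2 D \<sigma> \<tau>"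
  have Sne: "?S \<noteq> {}" using product_separable[OF product_exists] D0 unfolding D_def by blast
  define \<delta> where "\<delta> = Inf (?f ` ?S)"
  have bdd: "bdd_below (?f ` ?S)" using dist2_nonneg by (intro bdd_belowI) auto
  have low: "\<delta> \<le> ?f \<tau>" if "separable dims \<tau>" for \<tau> unfolding \<delta>_def using bdd that by (intro cInf_lower) auto
  have "\<forall>k::nat. \<exists>\<tau>. separable dims \<tau> \<and> ?f \<tau> < \<delta> + 1 / (real k + 1)"
  proof
    fix k :: nat
    have "Inf (?f ` ?S) < \<delta> + 1 / (real k + 1)" unfolding \<delta>_def by simp
    hence "\<exists>x\<in>?f ` ?S. x < \<delta> + 1 / (real k + 1)" using cInf_less_iff[of "?f ` ?S"] Sne bdd by blast
    thus "\<exists>\<tau>. separable dims \<tau> \<and> ?f \<tau> < \<delta> + 1 / (real k + 1)" by auto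
  qed
  then obtain T where Ts: "\<And>k. separable dims (T k)" and Tf: "\<And>k. ?f (T k) < \<delta> + 1 / (real k + 1)" by metis
  have bnd: "\<forall>k. \<forall>i\<in>{..<D}\<times>{..<D}. cmod (T k $$ i) \<le> 1"
    using sep_entry[OF Ts] unfolding D_def by auto
  obtain rr where rr: "strict_mono rr" and cv: "\<forall>i\<in>{..<D}\<times>{..<D}. \<exists>l. (\<lambda>k. T (rr k) $$ i) \<longlonglongrightarrow> l"
    using subseq_conv[OF _ bnd] by blast
  from bchoice[OF cv] obtain lf where lf: "\<forall>i\<in>{..<D}\<times>{..<D}. (\<lambda>k. T (rr k) $$ i) \<longlonglongrightarrow> lf i" by blast
  define P where "P = mat D D lf"
  have Pc: "P \<in> carrier_mat D D" unfolding P_def by simp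
  have Pl: "\<forall>a<D. \<forall>b<D. (\<lambda>k. T (rr k) $$ (a,b)) \<longlonglongrightarrow> P $$ (a,b)" unfolding P_def using lf by auto
  have Ps: "separable dims P" using sep_closed[of dims "\<lambda>k. T (rr k)" P] Ts Pc Pl unfolding D_def by blast
  have fP: "?f P \<le> \<delta>"
  proof -
    have "(\<lambda>k. ?f (T (rr k))) \<longlonglongrightarrow> ?f P"
      unfolding dist2_def using Pl by (intro tendsto_sum tendsto_power tendsto_norm tendsto_diff tendsto_const) auto
    moreover have "(\<lambda>k. \<delta> + 1 / (real (rr k) + 1)) \<longlonglongrightarrow> \<delta> + 0"
    proof (rule tendsto_add[OF tendsto_const])
      have "(\<lambda>n. inverse (real (Suc n))) \<longlonglongrightarrow> 0" by (rule LIMSEQ_inverse_real_of_nat)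
      from LIMSEQ_subseq_LIMSEQ[OF this rr] show "(\<lambda>k. 1 / (real (rr k) + 1)) \<longlonglongrightarrow> 0"
        by (simp add: o_def divide_inverse add.commute)
    qed
    moreover have "?f (T (rr k)) \<le> \<delta> + 1 / (real (rr k) + 1)" for k using Tf[of "rr k"] by simp
    ultimately show ?thesis by (intro LIMSEQ_le[of "\<lambda>k. ?f (T (rr k))" _ "\<lambda>k. \<delta> + 1 / (real (rr k) + 1)" "\<delta> + 0", simplified]) auto
  qed
  have fmin: "?f P \<le> ?f \<tau>" if "separable dims \<tau>" for \<tau> using fP low[OF that] by simp
  have Ph: "\<forall>i<D. \<forall>j<D. P $$ (j,i) = cnj (P $$ (i,j))" using sep_herm[OF Ps] unfolding D_def by blast
  have var: "(\<Sum>a<D. \<Sum>b<D. Re (cnj (\<sigma> $$ (a,b) - P $$ (a,b)) * (\<tau> $$ (a,b) - P $$ (a,b)))) \<le> 0"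
    if ts: "separable dims \<tau>" for \<tau>
  proof -
    define ip where "ip = (\<Sum>a<D. \<Sum>b<D. Re (cnj (\<sigma> $$ (a,b) - P $$ (a,b)) * (\<tau> $$ (a,b) - P $$ (a,b))))"
    define nY where "nY = (\<Sum>a<D. \<Sum>b<D. (cmod (\<tau> $$ (a,b) - P $$ (a,b)))\<^sup>2)"
    have nY0: "0 \<le> nY" unfolding nY_def by (intro sum_nonneg) auto
    have "2 * ip \<le> t * nY" if t: "0 < t" "t \<le> 1" for t
    proof -
      define Q where "Q = mat D D (\<lambda>(a,b). complex_of_real (1 - t) * P $$ (a,b) + complex_of_real t * \<tau> $$ (a,b))"
      have Qc: "Q \<in> carrier_mat D D" unfolding Q_def by simp
      have Qs: "separable dims Q"
        using sep_convex[OF Ps ts, of t Q] t Qc unfolding Q_def D_def by auto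
      have "?f Q = (\<Sum>a<D. \<Sum>b<D. (cmod ((\<sigma> $$ (a,b) - P $$ (a,b)) - complex_of_real t * (\<tau> $$ (a,b) - P $$ (a,b))))\<^sup>2)"
        unfolding dist2_def Q_def by (intro sum.cong refl) (simp add: algebra_simps)
      also have "\<dots> = (\<Sum>a<D. \<Sum>b<D. (cmod (\<sigma> $$ (a,b) - P $$ (a,b)))\<^sup>2
          - 2 * t * Re (cnj (\<sigma> $$ (a,b) - P $$ (a,b)) * (\<tau> $$ (a,b) - P $$ (a,b)))
          + t\<^sup>2 * (cmod (\<tau> $$ (a,b) - P $$ (a,b)))\<^sup>2)"
        unfolding cmod_expand ..
      also have "\<dots> = ?f P - 2 * t * ip + t\<^sup>2 * nY"
        unfolding dist2_def ip_def nY_def by (rule sum3)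
      finally have "?f Q = ?f P - 2 * t * ip + t\<^sup>2 * nY" .
      moreover have "?f P \<le> ?f Q" by (rule fmin[OF Qs])
      ultimately have "t * (2 * ip) \<le> t * (t * nY)" by (simp add: power2_eq_square algebra_simps)
      thus ?thesis using t by simp
    qed
    thus ?thesis unfolding ip_def[symmetric] using real_small nY0 by blast
  qed
  define W0 where "W0 = mat D D (\<lambda>(a,b). P $$ (a,b) - \<sigma> $$ (a,b))"
  have W0c: "W0 \<in> carrier_mat D D" unfolding W0_def by simp
  have W0e: "W0 $$ (a,b) = P $$ (a,b) - \<sigma> $$ (a,b)" if "a < D" "b < D" for a b unfolding W0_def using that by simp
  have W0h: "\<forall>i<D. \<forall>j<D. W0 $$ (j,i) = cnj (W0 $$ (i,j))"
  proof (intro allI impI)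
    fix i j assume ij: "i < D" "j < D"
    have "P $$ (j,i) = cnj (P $$ (i,j))" "\<sigma> $$ (j,i) = cnj (\<sigma> $$ (i,j))" using Ph sh ij by blast+
    thus "W0 $$ (j,i) = cnj (W0 $$ (i,j))" using ij by (simp add: W0e)
  qed
  define ipW where "ipW X = (\<Sum>a<D. \<Sum>b<D. Re (cnj (W0 $$ (a,b)) * X $$ (a,b)))" for X
  have reW0: "Re (mtrace (W0 * X)) = ipW X" if "X \<in> carrier_mat D D" for X
    unfolding herm_ip[OF W0c that W0h] ipW_def by (simp add: Re_sum)
  define c0 where "c0 = ipW P"
  have sepge: "c0 \<le> ipW \<tau>" if ts: "separable dims \<tau>" for \<tau>
  proof -
    have "ipW \<tau> - c0 = (\<Sum>a<D. \<Sum>b<D. Re (cnj (W0 $$ (a,b)) * (\<tau> $$ (a,b) - P $$ (a,b))))"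
      unfolding c0_def ipW_def by (simp add: sum_subtractf algebra_simps)
    also have "\<dots> = - (\<Sum>a<D. \<Sum>b<D. Re (cnj (\<sigma> $$ (a,b) - P $$ (a,b)) * (\<tau> $$ (a,b) - P $$ (a,b))))"
      by (simp add: W0e sum_negf[symmetric] algebra_simps)
    finally show ?thesis using var[OF ts] by simp
  qed
  have fpos: "0 < ?f P"
  proof (rule ccontr)
    assume "\<not> 0 < ?f P"
    hence z: "?f P = 0" using dist2_nonneg[of D \<sigma> P] by simp
    have "\<forall>a\<in>{..<D}. (\<Sum>b<D. (cmod (\<sigma> $$ (a,b) - P $$ (a,b)))\<^sup>2) = 0"
      using z unfolding dist2_def by (subst (asm) sum_nonneg_eq_0_iff) (auto intro: sum_nonneg)
    hence "\<forall>a<D. \<forall>b<D. (cmod (\<sigma> $$ (a,b) - P $$ (a,b)))\<^sup>2 = 0"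
      by (auto simp: sum_nonneg_eq_0_iff)
    hence "\<sigma> = P" using sc Pc by (intro eq_matI) auto
    thus False using Ps ns by simp
  qed
  have sigm: "ipW \<sigma> - c0 = - ?f P"
  proof -
    have "ipW \<sigma> - c0 = (\<Sum>a<D. \<Sum>b<D. Re (cnj (W0 $$ (a,b)) * (\<sigma> $$ (a,b) - P $$ (a,b))))"
      unfolding c0_def ipW_def by (simp add: sum_subtractf algebra_simps)
    also have "\<dots> = (\<Sum>a<D. \<Sum>b<D. - (cmod (\<sigma> $$ (a,b) - P $$ (a,b)))\<^sup>2)"
    proof (intro sum.cong refl)
      fix a b assume "a \<in> {..<D}" "b \<in> {..<D}"
      hence "W0 $$ (a,b) = - (\<sigma> $$ (a,b) - P $$ (a,b))" by (simp add: W0e)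
      thus "Re (cnj (W0 $$ (a,b)) * (\<sigma> $$ (a,b) - P $$ (a,b))) = - (cmod (\<sigma> $$ (a,b) - P $$ (a,b)))\<^sup>2"
        using re_neg[of "\<sigma> $$ (a,b) - P $$ (a,b)"] by simp
    qed
    also have "\<dots> = - ?f P" unfolding dist2_def by (simp add: sum_negf)
    finally show ?thesis .
  qed
  define W1 where "W1 = W0 - complex_of_real c0 \<cdot>\<^sub>m 1\<^sub>m D"
  have W1c: "W1 \<in> carrier_mat D D" unfolding W1_def by (rule minus_carrier_mat) simp
  have W1e: "W1 $$ (i,j) = W0 $$ (i,j) - (if i = j then complex_of_real c0 else 0)" if "i < D" "j < D" for i j
    unfolding W1_def using that W0c by simp
  have W1h: "\<forall>i<D. \<forall>j<D. W1 $$ (j,i) = cnj (W1 $$ (i,j))"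
  proof (intro allI impI)
    fix i j assume ij: "i < D" "j < D"
    have "W0 $$ (j,i) = cnj (W0 $$ (i,j))" using W0h ij by blast
    thus "W1 $$ (j,i) = cnj (W1 $$ (i,j))" using ij by (simp add: W1e)
  qed
  have reW1: "Re (mtrace (W1 * X)) = ipW X - c0" if X: "X \<in> carrier_mat D D" "mtrace X = 1" for X
    unfolding W1_def mtrace_shift[OF W0c X(1)] X(2) using reW0[OF X(1)] by simp
  have W1ew: "entanglement_witness dims W1"
    unfolding entanglement_witness_def D_def[symmetric]
  proof (intro conjI allI impI)
    show "W1 \<in> carrier_mat D D" by (rule W1c)
    show "hermitian_mat W1" unfolding hermitian_iff[OF W1c] by (rule W1h)
    fix \<tau> assume ts: "separable dims \<tau>"
    have tc: "\<tau> \<in> carrier_mat D D" using ts unfolding separable_def D_def by blast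
    show "0 \<le> Re (mtrace (W1 * \<tau>))" unfolding reW1[OF tc separable_trace[OF ts]] using sepge[OF ts] by simp
  qed
  have W1s: "Re (mtrace (W1 * \<sigma>)) < 0" unfolding reW1[OF sc st] sigm using fpos by simp
  define s where "s = Re (mtrace W1)"
  have W1b: "cmod (W1 $$ (a,b)) \<le> s" if "a < D" "b < D" for a b
    using bp_bound[OF EW_bp[OF W1ew]] that unfolding s_def D_def by blast
  have spos: "0 < s"
  proof (rule ccontr)
    assume "\<not> 0 < s"
    hence "W1 $$ (a,b) = 0" if "a < D" "b < D" for a b using W1b[OF that] by (metis norm_le_zero_iff not_less order_trans)
    hence "mtrace (W1 * \<sigma>) = 0" unfolding mtrace_mult[OF W1c sc] by simp
    thus False using W1s by simp
  qed
  have trW1: "mtrace W1 = complex_of_real s"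
  proof -
    have "Im (W1 $$ (i,i)) = 0" if "i < D" for i using W1h that
      by (metis cnj.simps(2) equation_minus_iff minus_zero neg_equal_zero)
    hence "Im (mtrace W1) = 0" unfolding mtrace_def using W1c by (simp add: Im_sum)
    thus ?thesis unfolding s_def by (simp add: complex_eq_iff)
  qed
  define W where "W = complex_of_real (1 / s) \<cdot>\<^sub>m W1"
  have Wc: "W \<in> carrier_mat D D" unfolding W_def using W1c by simp
  have Wh: "hermitian_mat W" unfolding hermitian_iff[OF Wc]
  proof (intro allI impI)
    fix i j assume ij: "i < D" "j < D"
    have "W1 $$ (j,i) = cnj (W1 $$ (i,j))" using W1h ij by blast
    thus "W $$ (j,i) = cnj (W $$ (i,j))" unfolding W_def using ij W1c by simp
  qed
  have Wt: "mtrace W = 1"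
  proof -
    have "mtrace W = (\<Sum>i<D. complex_of_real (1 / s) * W1 $$ (i,i))" unfolding mtrace_def W_def using W1c by simp
    also have "\<dots> = complex_of_real (1 / s) * mtrace W1" unfolding mtrace_def using W1c by (simp add: sum_distrib_left)
    finally show ?thesis using trW1 spos by simp
  qed
  have Wtr: "Re (mtrace (W * X)) = (1 / s) * Re (mtrace (W1 * X))" if "X \<in> carrier_mat D D" for X
    unfolding W_def mtrace_smult[OF W1c that] by simp
  have Wew: "normalized_EW dims W" unfolding normalized_EW_def entanglement_witness_def D_def[symmetric]
  proof (intro conjI allI impI)
    show "W \<in> carrier_mat D D" by (rule Wc)
    show "hermitian_mat W" by (rule Wh)
    show "mtrace W = 1" by (rule Wt)
    fix \<tau> assume ts: "separable dims \<tau>"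
    have tc: "\<tau> \<in> carrier_mat D D" using ts unfolding separable_def D_def by blast
    have "0 \<le> Re (mtrace (W1 * \<tau>))" using W1ew ts unfolding entanglement_witness_def by blast
    thus "0 \<le> Re (mtrace (W * \<tau>))" unfolding Wtr[OF tc] using spos by simp
  qed
  have "Re (mtrace (W * \<sigma>)) < 0" unfolding Wtr[OF sc] using W1s spos by (simp add: divide_neg_pos)
  thus ?thesis using Wew by blast
qed





lemma part_i_hard: assumes r: "density_op (prod_list dims) \<sigma>" and z: "witnessed_ent dims \<sigma> = 0"
  shows "separable dims \<sigma>"
proof (rule ccontr)
  assume "\<not> separable dims \<sigma>"
  then obtain W where W: "normalized_EW dims W" "Re (mtrace (W * \<sigma>)) < 0" using separation[OF r] by blast
  have "Fv dims \<sigma> < 0" using Fv_le[OF W(1) r] W(2) by simp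
  hence "0 < witnessed_ent dims \<sigma>" unfolding we_Fv by simp
  thus False using z by simp
qed

theorem proposition1:
  fixes dims :: "nat list"
  defines "D \<equiv> prod_list dims"
  shows
   "(\<forall>\<sigma>. density_op D \<sigma> \<longrightarrow> (witnessed_ent dims \<sigma> = 0 \<longleftrightarrow> separable dims \<sigma>))
  \<and> (\<forall>Us \<sigma>. length Us = length dims \<and> (\<forall>k < length dims. unitary_mat (dims ! k) (Us ! k))
        \<and> density_op D \<sigma> \<longrightarrow>
        witnessed_ent dims \<sigma> =
        witnessed_ent dims (kron_list (map mat_adjoint Us) * \<sigma> * kron_list Us))
  \<and> (\<forall>N. mat_norm D N \<longrightarrow> (\<exists>C::real. 0 \<le> C \<and> (\<forall>(\<epsilon>::real) \<rho> \<sigma>. 0 \<le> \<epsilon>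
        \<and> density_op D \<rho> \<and> density_op D \<sigma> \<and> N (\<rho> - \<sigma>) \<le> \<epsilon> \<longrightarrow>
        \<bar>witnessed_ent dims \<rho> - witnessed_ent dims \<sigma>\<bar> \<le> C * \<epsilon>)))
  \<and> (\<forall>\<rho> \<sigma> (t::real). density_op D \<rho> \<and> density_op D \<sigma> \<and> 0 \<le> t \<and> t \<le> 1 \<longrightarrow>
        witnessed_ent dims (complex_of_real t \<cdot>\<^sub>m \<rho> + complex_of_real (1 - t) \<cdot>\<^sub>m \<sigma>)
        \<le> t * witnessed_ent dims \<rho> + (1 - t) * witnessed_ent dims \<sigma>)"
  unfolding D_def
proof (intro conjI allI impI)
  fix \<sigma> assume r: "density_op (prod_list dims) \<sigma>"
  show "witnessed_ent dims \<sigma> = 0 \<longleftrightarrow> separable dims \<sigma>"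
    using part_i_easy[OF r] part_i_hard[OF r] by blast
next
  fix Us \<sigma>
  assume a: "length Us = length dims \<and> (\<forall>k < length dims. unitary_mat (dims ! k) (Us ! k)) \<and> density_op (prod_list dims) \<sigma>"
  have V: "lunit dims Us" unfolding lunit_def using a by blast
  show "witnessed_ent dims \<sigma> = witnessed_ent dims (kron_list (map mat_adjoint Us) * \<sigma> * kron_list Us)"
    using part_ii[OF V] a by blast
next
  fix N assume "mat_norm (prod_list dims) N"
  thus "\<exists>C::real. 0 \<le> C \<and> (\<forall>(\<epsilon>::real) \<rho> \<sigma>. 0 \<le> \<epsilon>
        \<and> density_op (prod_list dims) \<rho> \<and> density_op (prod_list dims) \<sigma> \<and> N (\<rho> - \<sigma>) \<le> \<epsilon> \<longrightarrow>
        \<bar>witnessed_ent dims \<rho> - witnessed_ent dims \<sigma>\<bar> \<le> C * \<epsilon>)" by (rule part_iv)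
next
  fix \<rho> \<sigma> and t :: real
  assume "density_op (prod_list dims) \<rho> \<and> density_op (prod_list dims) \<sigma> \<and> 0 \<le> t \<and> t \<le> 1"
  thus "witnessed_ent dims (complex_of_real t \<cdot>\<^sub>m \<rho> + complex_of_real (1 - t) \<cdot>\<^sub>m \<sigma>)
        \<le> t * witnessed_ent dims \<rho> + (1 - t) * witnessed_ent dims \<sigma>" using part_v by blast
qed


end
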